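(* Let $(R,\mathfrak m)$ be a Noetherian local ring of prime characteristic $p$ with $\operatorname{depth} R=0$, and let $L_\bullet$ be a complex of finitely generated free $R$-modules whose differentials, written as matrices with respect to bases, have all entries in $\mathfrak m$. Then for every integer $r$ with $r>\log_p c(R)$ and every integer $j$, $$H_j(L_\bullet\otimes_R {}^{\phi^r}\!R)=0 \iff L_j=0.$$ Consequently, if $M$ is a finitely generated $R$-module such that $\operatorname{Tor}^R_j(M,{}^{\phi^r}\!R)=0$ for some $j\ge 1$ and some $r>\log_p c(R)$, then $M$ is projective.
   Context: $\phi:R\to R$ denotes the Frobenius homomorphism $\phi(a)=a^p$. For $r\ge 1$, ${}^{\phi^r}\!R$ denotes the ring $R$ regarded as an $R$-module via $\phi^r$, i.e. $a\cdot b=a^{p^r}b$. For a local ring $(R,\mathfrak m)$ of depth zero, $c(R)$ is the smallest positive integer $s$ such that $(0:\mathfrak m)_R=\{x\in R\mid \mathfrak m x=0\}\not\subseteq \mathfrak m^s$ (such $s$ exists since $(0:\mathfrak m)_R\neq 0$ and by Krull's intersection theorem). *)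

theory Defs
  imports "HOL-Analysis.Analysis" "HOL-Computational_Algebra.Primes"
begin

section \<open>Ideals of a commutative ring (the ring is the whole type 'a)\<close>

definition ideal :: "'a::comm_ring_1 set \<Rightarrow> bool" where
  "ideal I \<longleftrightarrow> module.subspace ((*) :: 'a \<Rightarrow> 'a \<Rightarrow> 'a) I"

definition ideal_span :: "'a::comm_ring_1 set \<Rightarrow> 'a set" where
  "ideal_span S = module.span ((*) :: 'a \<Rightarrow> 'a \<Rightarrow> 'a) S"

definition noetherian_ring :: "'a::comm_ring_1 itself \<Rightarrow> bool" where
  "noetherian_ring _ \<longleftrightarrow> (\<forall>I::'a set. ideal I \<longrightarrow> (\<exists>S. finite S \<and> I = ideal_span S))"

definition local_ring_max :: "'a::comm_ring_1 set \<Rightarrow> bool" where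
  "local_ring_max m \<longleftrightarrow> ideal m \<and> m \<noteq> UNIV \<and>
     (\<forall>I. ideal I \<and> I \<noteq> UNIV \<longrightarrow> I \<subseteq> m)"

definition ideal_pow :: "'a::comm_ring_1 set \<Rightarrow> nat \<Rightarrow> 'a set" where
  "ideal_pow I s = ideal_span {(\<Prod>i<s. f i) | f. \<forall>i<s. f i \<in> I}"

text \<open>depth R = 0: there is no R-regular element in m (every element of m is a zero divisor).\<close>
definition depth_zero :: "'a::comm_ring_1 set \<Rightarrow> bool" where
  "depth_zero m \<longleftrightarrow> (\<forall>x\<in>m. \<exists>y. y \<noteq> 0 \<and> x * y = 0)"

definition socle :: "'a::comm_ring_1 set \<Rightarrow> 'a set" where
  "socle m = {x. \<forall>y\<in>m. y * x = 0}"

definition cR :: "'a::comm_ring_1 set \<Rightarrow> nat" where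
  "cR m = (LEAST s. s > 0 \<and> \<not> socle m \<subseteq> ideal_pow m s)"

text \<open>R^n: coordinate vectors nat => 'a vanishing from index n on.\<close>
definition vecs :: "nat \<Rightarrow> (nat \<Rightarrow> 'a::comm_ring_1) set" where
  "vecs n = {v. \<forall>k\<ge>n. v k = 0}"

definition mat_app :: "nat \<Rightarrow> nat \<Rightarrow> (nat \<Rightarrow> nat \<Rightarrow> 'a::comm_ring_1) \<Rightarrow> (nat \<Rightarrow> 'a) \<Rightarrow> (nat \<Rightarrow> 'a)" where
  "mat_app m n A v = (\<lambda>i. if i < m then (\<Sum>k<n. A i k * v k) else 0)"

text \<open>Base change along phi^r: tensoring the map R^n -> R^m given by A with the module
  {}^{phi^r}R gives the map R^n -> R^m with matrix (A i k ^ (p^r)).\<close>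
definition frob_mat :: "nat \<Rightarrow> nat \<Rightarrow> (nat \<Rightarrow> nat \<Rightarrow> 'a::comm_ring_1) \<Rightarrow> (nat \<Rightarrow> nat \<Rightarrow> 'a)" where
  "frob_mat p r A = (\<lambda>i k. A i k ^ (p ^ r))"

text \<open>A complex L of finite free modules indexed by integers: L_j = R^(rk j),
  differential d j : L_j -> L_(j-1) given by an rk(j-1) x rk j matrix.\<close>
definition free_complex :: "(int \<Rightarrow> nat) \<Rightarrow> (int \<Rightarrow> nat \<Rightarrow> nat \<Rightarrow> 'a::comm_ring_1) \<Rightarrow> bool" where
  "free_complex rk d \<longleftrightarrow> (\<forall>j. \<forall>v\<in>vecs (rk j).
      mat_app (rk (j - 2)) (rk (j - 1)) (d (j - 1)) (mat_app (rk (j - 1)) (rk j) (d j) v) = (\<lambda>_. 0))"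

definition minimal_complex :: "'a::comm_ring_1 set \<Rightarrow> (int \<Rightarrow> nat) \<Rightarrow> (int \<Rightarrow> nat \<Rightarrow> nat \<Rightarrow> 'a) \<Rightarrow> bool" where
  "minimal_complex m rk d \<longleftrightarrow> (\<forall>j i k. i < rk (j - 1) \<longrightarrow> k < rk j \<longrightarrow> d j i k \<in> m)"

definition frob_homology_zero ::
  "nat \<Rightarrow> nat \<Rightarrow> (int \<Rightarrow> nat) \<Rightarrow> (int \<Rightarrow> nat \<Rightarrow> nat \<Rightarrow> 'a::comm_ring_1) \<Rightarrow> int \<Rightarrow> bool" where
  "frob_homology_zero p r rk d j \<longleftrightarrow>
     (\<forall>v\<in>vecs (rk j). mat_app (rk (j - 1)) (rk j) (frob_mat p r (d j)) v = (\<lambda>_. 0) \<longrightarrow>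
        (\<exists>w\<in>vecs (rk (j + 1)). mat_app (rk j) (rk (j + 1)) (frob_mat p r (d (j + 1))) w = v))"

definition fin_gen_module :: "('a::comm_ring_1 \<Rightarrow> 'm::ab_group_add \<Rightarrow> 'm) \<Rightarrow> bool" where
  "fin_gen_module smul \<longleftrightarrow> module smul \<and> (\<exists>S. finite S \<and> module.span smul S = UNIV)"

text \<open>Free resolution of M by finite free modules F_i = R^(rk i) (i >= 0):
  d i : F_i -> F_(i-1) (i >= 1) is an rk(i-1) x rk i matrix, the augmentation
  F_0 -> M sends the k-th basis vector to g k.\<close>
definition free_resolution ::
  "('a::comm_ring_1 \<Rightarrow> 'm::ab_group_add \<Rightarrow> 'm) \<Rightarrow> (nat \<Rightarrow> nat) \<Rightarrow> (nat \<Rightarrow> nat \<Rightarrow> nat \<Rightarrow> 'a) \<Rightarrow> (nat \<Rightarrow> 'm) \<Rightarrow> bool" where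
  "free_resolution smul rk d g \<longleftrightarrow>
     (\<forall>x. \<exists>v\<in>vecs (rk 0). (\<Sum>k<rk 0. smul (v k) (g k)) = x) \<and>
     (\<forall>v\<in>vecs (rk 0). (\<Sum>k<rk 0. smul (v k) (g k)) = 0 \<longleftrightarrow>
        (\<exists>w\<in>vecs (rk 1). mat_app (rk 0) (rk 1) (d 1) w = v)) \<and>
     (\<forall>i\<ge>1. \<forall>v\<in>vecs (rk i). mat_app (rk (i - 1)) (rk i) (d i) v = (\<lambda>_. 0) \<longleftrightarrow>
        (\<exists>w\<in>vecs (rk (i + 1)). mat_app (rk i) (rk (i + 1)) (d (i + 1)) w = v))"

text \<open>Tor_j^R(M, {}^{phi^r}R) = 0 (j >= 1), computed as H_j(F tensor {}^{phi^r}R) for a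
  free resolution F of M (independent of the resolution).\<close>
definition tor_frob_zero :: "('a::comm_ring_1 \<Rightarrow> 'm::ab_group_add \<Rightarrow> 'm) \<Rightarrow> nat \<Rightarrow> nat \<Rightarrow> nat \<Rightarrow> bool" where
  "tor_frob_zero smul p r j \<longleftrightarrow> (\<exists>rk d g. free_resolution smul rk d g \<and>
     (\<forall>v\<in>vecs (rk j). mat_app (rk (j - 1)) (rk j) (frob_mat p r (d j)) v = (\<lambda>_. 0) \<longrightarrow>
        (\<exists>w\<in>vecs (rk (j + 1)). mat_app (rk j) (rk (j + 1)) (frob_mat p r (d (j + 1))) w = v)))"

text \<open>M is projective: M is a direct summand of a free module, namely the canonical
  surjection from the free module on the elements of M onto M splits R-linearly.\<close>
definition projective_module :: "('a::comm_ring_1 \<Rightarrow> 'm::ab_group_add \<Rightarrow> 'm) \<Rightarrow> bool" where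
  "projective_module smul \<longleftrightarrow> (\<exists>s :: 'm \<Rightarrow> 'm \<Rightarrow> 'a.
     (\<forall>x y. s (x + y) = (\<lambda>z. s x z + s y z)) \<and> (\<forall>a x. s (smul a x) = (\<lambda>y. a * s x y)) \<and>
     (\<forall>x. finite {y. s x y \<noteq> 0}) \<and>
     (\<forall>x. (\<Sum>y\<in>{y. s x y \<noteq> 0}. smul (s x y) y) = x))"

end

theory Submission
  imports Defs "HOL-Library.Function_Algebras"
begin
lemma module_mult: "module ((*) :: 'a::comm_ring_1 \<Rightarrow> 'a \<Rightarrow> 'a)"
  by standard (auto simp: algebra_simps)

interpretation rmod: module "(*) :: 'a::comm_ring_1 \<Rightarrow> 'a \<Rightarrow> 'a" by (rule module_mult)

declare rmod.scale_scale[simp del]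

lemma ideal_iff: "ideal (I::'a::comm_ring_1 set) \<longleftrightarrow> 0 \<in> I \<and> (\<forall>x\<in>I. \<forall>y\<in>I. x+y \<in> I) \<and> (\<forall>c. \<forall>x\<in>I. c*x \<in> I)"
  by (simp add: ideal_def rmod.subspace_def)

lemma ideal_0: "ideal I \<Longrightarrow> 0 \<in> I" by (simp add: ideal_iff)
lemma ideal_add: "ideal I \<Longrightarrow> x \<in> I \<Longrightarrow> y \<in> I \<Longrightarrow> x + y \<in> I" by (simp add: ideal_iff)
lemma ideal_multL: "ideal I \<Longrightarrow> x \<in> I \<Longrightarrow> c * x \<in> I" by (simp add: ideal_iff)
lemma ideal_multR: "ideal I \<Longrightarrow> x \<in> I \<Longrightarrow> x * c \<in> I" by (metis ideal_multL mult.commute)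
lemma ideal_neg: "ideal I \<Longrightarrow> x \<in> I \<Longrightarrow> - x \<in> I"
  using ideal_multL[of I x "-1"] by simp
lemma ideal_diff: "ideal I \<Longrightarrow> x \<in> I \<Longrightarrow> y \<in> I \<Longrightarrow> x - y \<in> I"
  using ideal_add ideal_neg by (metis diff_conv_add_uminus)
lemma ideal_sum: "ideal I \<Longrightarrow> (\<And>x. x \<in> A \<Longrightarrow> f x \<in> I) \<Longrightarrow> sum f A \<in> I"
  by (induct A rule: infinite_finite_induct) (auto simp: ideal_0 ideal_add)
lemma idealI: "0 \<in> I \<Longrightarrow> (\<And>x y. x \<in> I \<Longrightarrow> y \<in> I \<Longrightarrow> x + y \<in> I) \<Longrightarrow> (\<And>c x. x \<in> I \<Longrightarrow> c * x \<in> I) \<Longrightarrow> ideal I"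
  by (simp add: ideal_iff)

lemma ideal_span_ideal: "ideal (ideal_span S)"
  by (simp add: ideal_def ideal_span_def)
lemma ideal_span_base: "S \<subseteq> ideal_span S"
  by (simp add: ideal_span_def rmod.span_superset)
lemma ideal_span_min: "ideal I \<Longrightarrow> S \<subseteq> I \<Longrightarrow> ideal_span S \<subseteq> I"
  by (simp add: ideal_def ideal_span_def rmod.span_minimal)
lemma ideal_span_finite: "finite S \<Longrightarrow> ideal_span S = range (\<lambda>u. \<Sum>v\<in>S. u v * v)"
  by (simp add: ideal_span_def rmod.span_finite)
lemma ideal_span_mono: "S \<subseteq> T \<Longrightarrow> ideal_span S \<subseteq> ideal_span T"
  by (simp add: ideal_span_def rmod.span_mono)

lemma ideal_UNIV: "ideal (UNIV::'a::comm_ring_1 set)" by (simp add: ideal_iff)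

lemma ideal_one: "ideal I \<Longrightarrow> (1::'a::comm_ring_1) \<in> I \<Longrightarrow> I = UNIV"
  using ideal_multL[of I 1] by auto

lemma local_one: "local_ring_max (m::'a::comm_ring_1 set) \<Longrightarrow> 1 \<notin> m"
  unfolding local_ring_max_def using ideal_one by blast

lemma local_unit: assumes "local_ring_max (m::'a::comm_ring_1 set)" "x \<notin> m"
  shows "\<exists>u. u * x = 1"
proof (rule ccontr)
  assume nu: "\<nexists>u. u * x = 1"
  define I where "I = range (\<lambda>c. c * x)"
  have idI: "ideal I"
  proof (rule idealI)
    show "0 \<in> I" unfolding I_def by (rule range_eqI[of _ _ 0]) simp
  next
    fix a b assume "a \<in> I" "b \<in> I"
    then obtain c d where "a = c * x" "b = d * x" unfolding I_def by blast
    then have "a + b = (c + d) * x" by (simp add: distrib_right)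
    then show "a + b \<in> I" unfolding I_def by (rule range_eqI)
  next
    fix e a assume "a \<in> I"
    then obtain c where "a = c * x" unfolding I_def by blast
    then have "e * a = (e * c) * x" by (metis mult.assoc)
    then show "e * a \<in> I" unfolding I_def by (rule range_eqI)
  qed
  have "1 \<notin> I" using nu unfolding I_def by (auto simp: eq_commute[of 1])
  hence ne: "I \<noteq> UNIV" by blast
  have "I \<subseteq> m" using assms(1) idI ne unfolding local_ring_max_def by blast
  moreover have "x \<in> I" unfolding I_def by (rule range_eqI[of _ _ 1]) simp
  ultimately show False using assms(2) by blast
qed

lemma local_ideal: "local_ring_max m \<Longrightarrow> ideal m" by (simp add: local_ring_max_def)

lemma chain_finite_subset:
  assumes "finite S" "S \<subseteq> \<Union>C" "C \<noteq> {}" "subset.chain F C"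
  shows "\<exists>X\<in>C. S \<subseteq> X"
  using assms
proof (induction S rule: finite_induct)
  case empty then show ?case by blast
next
  case (insert s S)
  then obtain X where X: "X \<in> C" "S \<subseteq> X" by blast
  from insert obtain Y where Y: "Y \<in> C" "s \<in> Y" by blast
  from insert(6) X Y have "X \<subseteq> Y \<or> Y \<subseteq> X" unfolding subset.chain_def by blast
  then show ?case using X Y by blast
qed

lemma noeth_max:
  fixes F :: "'a::comm_ring_1 set set"
  assumes N: "noetherian_ring TYPE('a)" and ne: "F \<noteq> {}" and id: "\<And>I. I \<in> F \<Longrightarrow> ideal I"
  shows "\<exists>M\<in>F. \<forall>I\<in>F. M \<subseteq> I \<longrightarrow> I = M"
proof (rule subset_Zorn_nonempty[OF ne])
  fix C assume C: "C \<noteq> {}" "subset.chain F C"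
  have CF: "C \<subseteq> F" using C(2) unfolding subset.chain_def by blast
  have "ideal (\<Union>C)"
  proof (rule idealI)
    show "0 \<in> \<Union>C" using C CF id ideal_0 by blast
  next
    fix x y assume "x \<in> \<Union>C" "y \<in> \<Union>C"
    then obtain X Y where "X \<in> C" "Y \<in> C" "x \<in> X" "y \<in> Y" by blast
    moreover from this C(2) have "X \<subseteq> Y \<or> Y \<subseteq> X" unfolding subset.chain_def by blast
    ultimately show "x + y \<in> \<Union>C" using CF id ideal_add by (metis UnionI subsetD)
  next
    fix c x assume "x \<in> \<Union>C"
    then show "c * x \<in> \<Union>C" using CF id ideal_multL by blast
  qed
  then obtain S where S: "finite S" "\<Union>C = ideal_span S" using N unfolding noetherian_ring_def by blast
  then have "S \<subseteq> \<Union>C" using ideal_span_base by blast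
  then obtain X where X: "X \<in> C" "S \<subseteq> X" using chain_finite_subset[OF S(1) _ C] by blast
  then have "ideal_span S \<subseteq> X" using ideal_span_min CF id by blast
  then have "\<Union>C = X" using S X by blast
  then show "\<Union>C \<in> F" using X CF by blast
qed

definition ann :: "'a::comm_ring_1 \<Rightarrow> 'a set" where "ann y = {a. a * y = 0}"

definition prime_id :: "'a::comm_ring_1 set \<Rightarrow> bool" where
  "prime_id P \<longleftrightarrow> ideal P \<and> 1 \<notin> P \<and> (\<forall>a b. a * b \<in> P \<longrightarrow> a \<in> P \<or> b \<in> P)"

lemma ideal_ann: "ideal (ann y)"
  unfolding ann_def by (rule idealI) (auto simp: distrib_right mult.assoc)

lemma ideal_prod_mem:
  assumes "ideal P" "finite A" "a \<in> A" "f a \<in> P"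
  shows "prod f A \<in> P"
proof -
  have "prod f A = f a * prod f (A - {a})" using assms(2,3) by (simp add: prod.remove)
  then show ?thesis using assms ideal_multR by metis
qed

lemma prime_prod:
  assumes "prime_id P" "finite A" "prod f A \<in> P"
  shows "\<exists>a\<in>A. f a \<in> P"
  using assms(2,3)
proof (induction A rule: finite_induct)
  case empty then show ?case using assms(1) by (simp add: prime_id_def)
next
  case (insert a A)
  then have "f a * prod f A \<in> P" by simp
  then have "f a \<in> P \<or> prod f A \<in> P" using assms(1) unfolding prime_id_def by blast
  then show ?case using insert by blast
qed

lemma prime_inter:
  assumes "prime_id P" "finite T" "\<And>t. t \<in> T \<Longrightarrow> ideal (J t)"
    and "\<And>a. (\<forall>t\<in>T. a \<in> J t) \<Longrightarrow> a \<in> P"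
  shows "\<exists>t\<in>T. J t \<subseteq> P"
proof (rule ccontr)
  assume "\<not> ?thesis"
  then have "\<forall>t\<in>T. \<exists>a. a \<in> J t \<and> a \<notin> P" by blast
  then obtain g where g: "\<And>t. t \<in> T \<Longrightarrow> g t \<in> J t \<and> g t \<notin> P" by metis
  have "\<forall>t\<in>T. prod g T \<in> J t" using g assms(2,3) ideal_prod_mem by metis
  then have "prod g T \<in> P" using assms(4) by blast
  then obtain t where "t \<in> T" "g t \<in> P" using prime_prod[OF assms(1,2)] by blast
  then show False using g by blast
qed

definition AF :: "'a::comm_ring_1 set set" where "AF = {ann y | y. y \<noteq> 0}"
definition MA :: "'a::comm_ring_1 set set" where "MA = {P \<in> AF. \<forall>Q\<in>AF. P \<subseteq> Q \<longrightarrow> Q = P}"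


lemma MA_prime: assumes "P \<in> MA" shows "prime_id P"
proof -
  from assms obtain y where y: "y \<noteq> 0" "P = ann y" and mx: "\<forall>Q\<in>AF. P \<subseteq> Q \<longrightarrow> Q = P"
    unfolding MA_def AF_def by blast
  have "1 \<notin> P" using y by (simp add: ann_def)
  moreover have "a \<in> P \<or> b \<in> P" if ab: "a * b \<in> P" for a b
  proof (rule disjCI)
    assume "b \<notin> P"
    then have by0: "b * y \<noteq> 0" using y by (simp add: ann_def)
    have "P \<subseteq> ann (b * y)"
    proof
      fix x assume "x \<in> P"
      then have "x * y = 0" using y by (simp add: ann_def)
      then have "x * (b * y) = 0" by (metis mult.left_commute mult_zero_right)
      then show "x \<in> ann (b * y)" by (simp add: ann_def)
    qed
    moreover have "ann (b * y) \<in> AF" using by0 unfolding AF_def by blast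
    ultimately have eq: "ann (b * y) = P" using mx by blast
    have "a * b * y = 0" using ab y(2) unfolding ann_def by blast
    then have "a * (b * y) = 0" by (simp only: mult.assoc)
    then have "a \<in> ann (b * y)" unfolding ann_def by (rule CollectI)
    then show "a \<in> P" using eq by blast
  qed
  ultimately show ?thesis using y ideal_ann unfolding prime_id_def by blast
qed

lemma zd_in_MA:
  fixes y :: "'a::comm_ring_1"
  assumes N: "noetherian_ring TYPE('a)"
  assumes "z * y = 0" "y \<noteq> 0"
  shows "\<exists>P\<in>MA. z \<in> P"
proof -
  let ?F = "{ann w | w. w \<noteq> 0 \<and> ann y \<subseteq> ann w}"
  have ne: "?F \<noteq> {}" using assms(3) by blast
  have idl: "\<And>I. I \<in> ?F \<Longrightarrow> ideal I" using ideal_ann by blast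
  have "\<exists>M\<in>?F. \<forall>I\<in>?F. M \<subseteq> I \<longrightarrow> I = M" by (rule noeth_max[OF N ne idl])
  then obtain M where M: "M \<in> ?F" "\<forall>I\<in>?F. M \<subseteq> I \<longrightarrow> I = M" by (rule bexE)
  have "M \<in> MA"
    unfolding MA_def AF_def using M by auto
  moreover have "z \<in> M" using M assms(2) by (auto simp: ann_def)
  ultimately show ?thesis by blast
qed

lemma MA_finite:
  assumes N: "noetherian_ring TYPE('a::comm_ring_1)"
  shows "finite (MA :: 'a set set)"
proof -
  define W where "W = {y::'a. y \<noteq> 0 \<and> ann y \<in> MA}"
  let ?G = "{ideal_span T | T. finite T \<and> T \<subseteq> W}"
  have ne: "?G \<noteq> {}" by blast
  have idl: "\<And>I. I \<in> ?G \<Longrightarrow> ideal I" using ideal_span_ideal by blast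
  have "\<exists>M\<in>?G. \<forall>I\<in>?G. M \<subseteq> I \<longrightarrow> I = M" by (rule noeth_max[OF N ne idl])
  then obtain M where M: "M \<in> ?G" "\<forall>I\<in>?G. M \<subseteq> I \<longrightarrow> I = M" by (rule bexE)
  then obtain T0 where T0: "finite T0" "T0 \<subseteq> W" "M = ideal_span T0" by blast
  have inspan: "w \<in> ideal_span T0" if "w \<in> W" for w :: 'a
  proof -
    have "ideal_span (insert w T0) \<in> ?G" using T0 that by blast
    moreover have "M \<subseteq> ideal_span (insert w T0)" using T0 ideal_span_mono by blast
    ultimately have "ideal_span (insert w T0) = M" using M by blast
    then show ?thesis using ideal_span_base T0 by blast
  qed
  have "(MA::'a set set) \<subseteq> ann ` T0"
  proof
    fix P :: "'a set" assume P: "P \<in> MA"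
    then obtain w where w: "w \<noteq> 0" "P = ann w" unfolding MA_def AF_def by blast
    then have wW: "w \<in> W" using P W_def by blast
    then obtain u where u: "w = (\<Sum>v\<in>T0. u v * v)" using inspan ideal_span_finite[OF T0(1)] by blast
    have "\<exists>t\<in>T0. ann t \<subseteq> ann w"
    proof (rule prime_inter[OF _ T0(1)])
      show "prime_id (ann w)" using MA_prime P w by simp
      show "ideal (ann t)" for t by (rule ideal_ann)
      fix a assume "\<forall>t\<in>T0. a \<in> ann t"
      then have "\<forall>t\<in>T0. a * t = 0" by (simp add: ann_def)
      then have "(\<Sum>v\<in>T0. u v * (a * v)) = 0" by simp
      moreover have "a * w = (\<Sum>v\<in>T0. u v * (a * v))" unfolding u sum_distrib_left
        by (rule sum.cong) (simp_all only: mult.left_commute)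
      ultimately have "a * w = 0" by simp
      then show "a \<in> ann w" by (simp add: ann_def)
    qed
    then obtain t where t: "t \<in> T0" "ann t \<subseteq> ann w" by blast
    then have "ann t \<in> MA" using T0 W_def by blast
    moreover have "ann w \<in> AF" using w AF_def by blast
    ultimately have "ann w = ann t" using t unfolding MA_def by blast
    then show "P \<in> ann ` T0" using w t by blast
  qed
  then show ?thesis using T0(1) finite_subset by blast
qed



lemma prime_avoid:
  assumes "finite F" "\<forall>P\<in>F. prime_id P" "ideal I" "I \<subseteq> \<Union>F"
  shows "\<exists>P\<in>F. I \<subseteq> P"
  using assms
proof (induction "card F" arbitrary: F rule: less_induct)
  case less
  show ?case
  proof (cases "\<exists>P\<in>F. I \<subseteq> \<Union>(F - {P})")
    case True
    then obtain P where P: "P \<in> F" "I \<subseteq> \<Union>(F - {P})" by blast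
    have c: "card (F - {P}) < card F" by (rule card_Diff1_less[OF less.prems(1) P(1)])
    have "\<exists>Q\<in>F - {P}. I \<subseteq> Q"
      by (rule less.hyps[OF c]) (use less.prems P in auto)
    then show ?thesis by blast
  next
    case False
    then have "\<forall>P\<in>F. \<exists>x. x \<in> I \<and> x \<notin> \<Union>(F - {P})" by blast
    then obtain g where g: "\<And>P. P \<in> F \<Longrightarrow> g P \<in> I \<and> g P \<notin> \<Union>(F - {P})" by metis
    have gP: "g P \<in> P" if "P \<in> F" for P using g[OF that] less.prems(4) by blast
    show ?thesis
    proof (cases "F = {}")
      case True
      then show ?thesis using less.prems(3,4) ideal_0 by blast
    next
      case False
      then obtain P0 where P0: "P0 \<in> F" by blast
      show ?thesis
      proof (cases "F - {P0} = {}")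
        case True
        then have "F = {P0}" using P0 by blast
        then show ?thesis using less.prems(4) by blast
      next
        case False
        then obtain P1 where P1: "P1 \<in> F - {P0}" by blast
        have fin: "finite (F - {P0})" using less.prems(1) by simp
        have prI: "prod g (F - {P0}) \<in> I"
          using ideal_prod_mem[OF less.prems(3) fin P1] g P1 by blast
        define z where "z = g P0 + prod g (F - {P0})"
        have "z \<in> I" unfolding z_def using prI g P0 ideal_add less.prems(3) by blast
        then obtain Q where Q: "Q \<in> F" "z \<in> Q" using less.prems(4) by blast
        have pQ: "prime_id Q" using Q less.prems(2) by blast
        hence idQ: "ideal Q" by (simp add: prime_id_def)
        show ?thesis
        proof (cases "Q = P0")
          case True
          have "prod g (F - {P0}) = z - g P0" unfolding z_def by simp
          also have "\<dots> \<in> Q" using Q gP[OF P0] True ideal_diff[OF idQ] by blast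
          finally obtain P where P: "P \<in> F - {P0}" "g P \<in> Q"
            using prime_prod[OF pQ fin] by blast
          then have "g P \<notin> \<Union>(F - {P})" using g by blast
          moreover have "Q \<in> F - {P}" using P Q True by blast
          ultimately show ?thesis using P by blast
        next
          case False
          have "Q \<in> F - {P0}" using Q False by blast
          then have "prod g (F - {P0}) \<in> Q" using ideal_prod_mem[OF idQ fin] gP Q by blast
          then have "g P0 \<in> Q" using \<open>z \<in> Q\<close> ideal_diff[OF idQ] unfolding z_def by (metis add_diff_cancel_right')
          moreover have "g P0 \<notin> \<Union>(F - {P0})" using g P0 by blast
          ultimately show ?thesis using \<open>Q \<in> F - {P0}\<close> by blast
        qed
      qed
    qed
  qed
qed

lemma socle_exists:
  fixes m :: "'a::comm_ring_1 set"
  assumes N: "noetherian_ring TYPE('a)" and L: "local_ring_max m" and D: "depth_zero m"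
  shows "\<exists>y. y \<noteq> 0 \<and> (\<forall>a\<in>m. a * y = 0)"
proof -
  have sub: "m \<subseteq> \<Union>MA"
  proof
    fix a assume "a \<in> m"
    then obtain y where "y \<noteq> 0" "a * y = 0" using D unfolding depth_zero_def by blast
    then obtain P where "P \<in> MA" "a \<in> P" using zd_in_MA[OF N] by blast
    then show "a \<in> \<Union>MA" by blast
  qed
  have pr: "\<forall>P\<in>(MA::'a set set). prime_id P" using MA_prime by blast
  have "\<exists>P\<in>MA. m \<subseteq> P" by (rule prime_avoid[OF MA_finite[OF N] pr local_ideal[OF L] sub])
  then obtain P where P: "P \<in> MA" "m \<subseteq> P" by (rule bexE)
  then have "P \<in> AF" unfolding MA_def by blast
  then obtain y where y: "y \<noteq> 0" "P = ann y" unfolding AF_def by blast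
  have "\<forall>a\<in>m. a * y = 0"
  proof
    fix a assume "a \<in> m"
    then have "a \<in> ann y" using P y by blast
    then show "a * y = 0" unfolding ann_def by (rule CollectD)
  qed
  then show ?thesis using y by blast
qed

lemma pow_in_ideal: "ideal Q \<Longrightarrow> s ^ k \<in> Q \<Longrightarrow> k \<le> k' \<Longrightarrow> s ^ k' \<in> Q"
proof -
  assume a: "ideal Q" "s ^ k \<in> Q" "k \<le> k'"
  have "s ^ k' = s ^ k * s ^ (k' - k)" using a(3) by (simp flip: power_add)
  then show ?thesis using a ideal_multR by metis
qed

lemma socle_not_pow:
  fixes m :: "'a::comm_ring_1 set"
  assumes N: "noetherian_ring TYPE('a)" and L: "local_ring_max m"
    and y0: "y \<noteq> 0" and ys: "\<forall>a\<in>m. a * y = 0"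
  shows "\<exists>s>0. y \<notin> ideal_pow m s"
proof -
  let ?F = "{I. ideal I \<and> y \<notin> I}"
  have "{0} \<in> ?F" using y0 by (auto intro: idealI)
  then have ne: "?F \<noteq> {}" by blast
  have idl: "\<And>I. I \<in> ?F \<Longrightarrow> ideal I" by blast
  have "\<exists>M\<in>?F. \<forall>I\<in>?F. M \<subseteq> I \<longrightarrow> I = M" by (rule noeth_max[OF N ne idl])
  then obtain Q where Q: "Q \<in> ?F" and Qm: "\<forall>I\<in>?F. Q \<subseteq> I \<longrightarrow> I = Q" by (rule bexE)
  have idQ: "ideal Q" and yQ: "y \<notin> Q" using Q by auto
  have Qmax: "y \<in> J" if "ideal J" "Q \<subseteq> J" "J \<noteq> Q" for J
    using Qm that by blast
  define colon where "colon a k = {b. b * a ^ k \<in> Q}" for a :: 'a and k :: nat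
  have idc: "ideal (colon a k)" for a k
    unfolding colon_def
  proof (rule idealI)
    show "0 \<in> {b. b * a ^ k \<in> Q}" using ideal_0[OF idQ] by simp
    show "x + y \<in> {b. b * a ^ k \<in> Q}" if "x \<in> {b. b * a ^ k \<in> Q}" "y \<in> {b. b * a ^ k \<in> Q}" for x y
      using that ideal_add[OF idQ] by (simp add: distrib_right)
    show "c * x \<in> {b. b * a ^ k \<in> Q}" if "x \<in> {b. b * a ^ k \<in> Q}" for c x
    proof -
      have "x * a ^ k \<in> Q" using that by simp
      then have "c * (x * a ^ k) \<in> Q" by (rule ideal_multL[OF idQ])
      then show ?thesis by (simp only: mem_Collect_eq mult.assoc)
    qed
  qed
  have nil: "\<exists>k. a ^ k \<in> Q" if am: "a \<in> m" for a
  proof -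
    let ?G = "{colon a k | k. True}"
    have neG: "?G \<noteq> {}" by blast
    have idG: "\<And>I. I \<in> ?G \<Longrightarrow> ideal I" using idc by blast
    have "\<exists>M\<in>?G. \<forall>I\<in>?G. M \<subseteq> I \<longrightarrow> I = M" by (rule noeth_max[OF N neG idG])
    then obtain M where M: "M \<in> ?G" and Mm: "\<forall>I\<in>?G. M \<subseteq> I \<longrightarrow> I = M" by (rule bexE)
    then obtain k where k: "M = colon a k" by blast
    have "colon a k \<subseteq> colon a (Suc k)"
    proof
      fix b assume "b \<in> colon a k"
      then have "b * a ^ k \<in> Q" unfolding colon_def by simp
      then have "b * a ^ k * a \<in> Q" by (rule ideal_multR[OF idQ])
      then show "b \<in> colon a (Suc k)" unfolding colon_def by (simp only: mem_Collect_eq power_Suc2 mult.assoc)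
    qed
    moreover have "colon a (Suc k) \<in> ?G" by blast
    ultimately have ceq: "colon a (Suc k) = colon a k" using Mm k by blast
    show ?thesis
    proof (rule ccontr)
      assume "\<nexists>k. a ^ k \<in> Q"
      then have nk: "a ^ k \<notin> Q" by blast
      define J where "J = {q + b * a ^ k | q b. q \<in> Q}"
      have idJ: "ideal J"
        unfolding J_def
      proof (rule idealI)
        have "0 = 0 + 0 * a ^ k" by simp
        then show "0 \<in> {q + b * a ^ k | q b. q \<in> Q}" using ideal_0[OF idQ] by blast
      next
        fix x z assume "x \<in> {q + b * a ^ k | q b. q \<in> Q}" "z \<in> {q + b * a ^ k | q b. q \<in> Q}"
        then obtain q1 b1 q2 b2 where "x = q1 + b1 * a ^ k" "z = q2 + b2 * a ^ k" "q1 \<in> Q" "q2 \<in> Q"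
          by blast
        then have "x + z = (q1 + q2) + (b1 + b2) * a ^ k" by (simp add: algebra_simps)
        moreover have "q1 + q2 \<in> Q" using \<open>q1 \<in> Q\<close> \<open>q2 \<in> Q\<close> by (rule ideal_add[OF idQ])
        ultimately show "x + z \<in> {q + b * a ^ k | q b. q \<in> Q}" by blast
      next
        fix c x assume "x \<in> {q + b * a ^ k | q b. q \<in> Q}"
        then obtain q1 b1 where "x = q1 + b1 * a ^ k" "q1 \<in> Q" by blast
        then have "c * x = c * q1 + (c * b1) * a ^ k" by (simp add: algebra_simps)
        moreover have "c * q1 \<in> Q" using \<open>q1 \<in> Q\<close> by (rule ideal_multL[OF idQ])
        ultimately show "c * x \<in> {q + b * a ^ k | q b. q \<in> Q}" by blast
      qed
      have QJ: "Q \<subseteq> J"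
      proof
        fix q assume "q \<in> Q"
        moreover have "q = q + 0 * a ^ k" by simp
        ultimately show "q \<in> J" unfolding J_def by blast
      qed
      have "a ^ k = 0 + 1 * a ^ k" by simp
      then have "a ^ k \<in> J" unfolding J_def using ideal_0[OF idQ] by blast
      then have "J \<noteq> Q" using nk by blast
      then have "y \<in> J" using Qmax idJ QJ by blast
      then obtain q b where qb: "y = q + b * a ^ k" "q \<in> Q" unfolding J_def by blast
      have "a * y = 0" using ys am by blast
      then have "a * q + b * a ^ Suc k = 0" using qb(1) by (simp add: algebra_simps)
      then have "b * a ^ Suc k = - (a * q)" by (simp add: eq_neg_iff_add_eq_0 add.commute)
      also have "\<dots> \<in> Q" using qb(2) ideal_neg[OF idQ] ideal_multL[OF idQ] by blast
      finally have "b \<in> colon a (Suc k)" unfolding colon_def by simp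
      then have "b \<in> colon a k" using ceq by simp
      then have "b * a ^ k \<in> Q" unfolding colon_def by simp
      then have "y \<in> Q" using qb ideal_add[OF idQ] by simp
      then show False using yQ by blast
    qed
  qed
  obtain S where S: "finite S" "m = ideal_span S"
    using N local_ideal[OF L] unfolding noetherian_ring_def by blast
  have Sm: "S \<subseteq> m" using S ideal_span_base by blast
  have "\<forall>s\<in>S. \<exists>k. s ^ k \<in> Q" using nil Sm by blast
  then obtain kf where kf: "\<And>s. s \<in> S \<Longrightarrow> s ^ kf s \<in> Q" by metis
  define K where "K = (\<Sum>s\<in>S. kf s)"
  define Nn where "Nn = card S * K + 1"
  have Kge: "kf s \<le> K" if "s \<in> S" for s
    unfolding K_def by (rule member_le_sum[OF that]) (simp_all add: S(1))
  have gQ: "(\<Prod>i<Nn. g i) \<in> Q" if g: "g \<in> PiE {..<Nn} (\<lambda>_. S)" for g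
  proof -
    have gS: "g ` {..<Nn} \<subseteq> S" using g by (auto simp: PiE_def Pi_def)
    define fib where "fib s = {i. i \<in> {..<Nn} \<and> g i = s}" for s
    have "(\<Sum>s\<in>S. \<Sum>i\<in>fib s. (1::nat)) = (\<Sum>i\<in>{..<Nn}. 1)"
      unfolding fib_def by (rule sum.group[OF _ S(1) gS]) simp
    then have sumc: "(\<Sum>s\<in>S. card (fib s)) = Nn" by simp
    have "\<exists>s\<in>S. K \<le> card (fib s)"
    proof (rule ccontr)
      assume "\<not> ?thesis"
      then have "\<And>s. s \<in> S \<Longrightarrow> card (fib s) \<le> K" by force
      then have "(\<Sum>s\<in>S. card (fib s)) \<le> of_nat (card S) * K" by (rule sum_bounded_above)
      then show False using sumc unfolding Nn_def by simp
    qed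
    then obtain s0 where s0: "s0 \<in> S" "K \<le> card (fib s0)" by blast
    have pf: "(\<Prod>i\<in>fib s. g i) = s ^ card (fib s)" for s
    proof -
      have "(\<Prod>i\<in>fib s. g i) = (\<Prod>i\<in>fib s. s)" by (rule prod.cong) (simp_all add: fib_def)
      then show ?thesis by simp
    qed
    have "(\<Prod>s\<in>S. \<Prod>i\<in>fib s. g i) = (\<Prod>i<Nn. g i)"
      unfolding fib_def by (rule prod.group[OF _ S(1) gS]) simp
    moreover have "s0 ^ card (fib s0) \<in> Q"
      using pow_in_ideal[OF idQ kf[OF s0(1)]] Kge[OF s0(1)] s0(2) by simp
    then have "(\<Prod>s\<in>S. \<Prod>i\<in>fib s. g i) \<in> Q"
      using ideal_prod_mem[OF idQ S(1) s0(1), of "\<lambda>s. \<Prod>i\<in>fib s. g i"] pf by simp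
    ultimately show ?thesis by simp
  qed
  have prodQ: "(\<Prod>i<Nn. f i) \<in> Q" if f: "\<forall>i<Nn. f i \<in> m" for f
  proof -
    have "\<forall>i\<in>{..<Nn}. \<exists>u. f i = (\<Sum>v\<in>S. u v * v)"
      using f S ideal_span_finite[OF S(1)] by auto
    then obtain U where U: "\<And>i. i \<in> {..<Nn} \<Longrightarrow> f i = (\<Sum>v\<in>S. U i v * v)" by metis
    have "(\<Prod>i<Nn. f i) = (\<Prod>i<Nn. \<Sum>v\<in>S. U i v * v)" using U by (rule prod.cong[OF refl])
    also have "\<dots> = (\<Sum>g\<in>PiE {..<Nn} (\<lambda>_. S). \<Prod>i<Nn. U i (g i) * g i)"
      by (rule prod_sum_PiE) (simp_all add: S(1))
    also have "\<dots> \<in> Q"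
    proof (rule ideal_sum[OF idQ])
      fix g assume g: "g \<in> PiE {..<Nn} (\<lambda>_. S)"
      have "(\<Prod>i<Nn. U i (g i) * g i) = (\<Prod>i<Nn. U i (g i)) * (\<Prod>i<Nn. g i)"
        by (rule prod.distrib)
      then show "(\<Prod>i<Nn. U i (g i) * g i) \<in> Q" using gQ[OF g] ideal_multL[OF idQ] by simp
    qed
    finally show ?thesis .
  qed
  have "ideal_pow m Nn \<subseteq> Q"
    unfolding ideal_pow_def by (rule ideal_span_min[OF idQ]) (use prodQ in blast)
  then have "y \<notin> ideal_pow m Nn" using yQ by blast
  moreover have "Nn > 0" unfolding Nn_def by simp
  ultimately show ?thesis by blast
qed

lemma ideal_pow_ideal: "ideal (ideal_pow I s)"
  unfolding ideal_pow_def by (rule ideal_span_ideal)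

lemma ideal_pow_gen: assumes a: "\<forall>i<s. f i \<in> I" shows "(\<Prod>i<s. f i) \<in> ideal_pow I s"
proof -
  have "(\<Prod>i<s. f i) \<in> {\<Prod>i<s. g i |g. \<forall>i<s. g i \<in> I}"
    using a by (intro CollectI exI[of _ f]) simp
  then show ?thesis unfolding ideal_pow_def by (rule subsetD[OF ideal_span_base])
qed

lemma ideal_pow_Suc_sub:
  fixes I :: "'a::comm_ring_1 set"
  shows "ideal_pow I (Suc t) \<subseteq> ideal_pow I t"
  unfolding ideal_pow_def[of I "Suc t"]
proof (rule ideal_span_min[OF ideal_pow_ideal])
  show "{\<Prod>i<Suc t. f i |f. \<forall>i<Suc t. f i \<in> I} \<subseteq> ideal_pow I t"
  proof
    fix z assume "z \<in> {\<Prod>i<Suc t. f i |f. \<forall>i<Suc t. f i \<in> I}"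
    then obtain f where f: "z = (\<Prod>i<Suc t. f i)" "\<forall>i<Suc t. f i \<in> I" by blast
    have "(\<Prod>i<t. f i) \<in> ideal_pow I t" using f(2) by (intro ideal_pow_gen) simp
    then have "(\<Prod>i<t. f i) * f t \<in> ideal_pow I t" by (rule ideal_multR[OF ideal_pow_ideal])
    then show "z \<in> ideal_pow I t" using f(1) by simp
  qed
qed

lemma ideal_pow_antimono:
  fixes I :: "'a::comm_ring_1 set"
  assumes "s \<le> t" shows "ideal_pow I t \<subseteq> ideal_pow I s"
  using assms
proof (induction t rule: dec_induct)
  case base then show ?case by simp
next
  case (step t) then show ?case using ideal_pow_Suc_sub[of I t] by blast
qed

lemma pow_in_ideal_pow: "a \<in> I \<Longrightarrow> a ^ q \<in> ideal_pow I q"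
  using ideal_pow_gen[of q "\<lambda>_. a" I] by simp

lemma cR_props:
  fixes m :: "'a::comm_ring_1 set"
  assumes N: "noetherian_ring TYPE('a)" and L: "local_ring_max m" and D: "depth_zero m"
  shows "cR m > 0 \<and> (\<exists>x. (\<forall>a\<in>m. a * x = 0) \<and> x \<notin> ideal_pow m (cR m))"
proof -
  obtain y where y: "y \<noteq> 0" "\<forall>a\<in>m. a * y = 0" using socle_exists[OF N L D] by blast
  obtain s where s: "s > 0" "y \<notin> ideal_pow m s" using socle_not_pow[OF N L y] by blast
  have "y \<in> socle m" using y(2) unfolding socle_def by blast
  then have "s > 0 \<and> \<not> socle m \<subseteq> ideal_pow m s" using s by blast
  then have "cR m > 0 \<and> \<not> socle m \<subseteq> ideal_pow m (cR m)"
    unfolding cR_def by (rule LeastI)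
  then show ?thesis unfolding socle_def by blast
qed

lemma cR_less:
  assumes p: "prime (p::nat)" and c: "c > 0" and r: "real r > log (real p) (real c)"
  shows "c < p ^ r"
proof (rule ccontr)
  assume "\<not> c < p ^ r"
  then have le: "real (p ^ r) \<le> real c" by simp
  have p1: "1 < real p" using prime_gt_1_nat[OF p] by simp
  have "log (real p) (real (p ^ r)) \<le> log (real p) (real c)"
    using le p1 c by (subst log_le_cancel_iff) (simp_all add: prime_gt_0_nat[OF p])
  moreover have "log (real p) (real (p ^ r)) = real r"
    using p1 by (simp add: log_pow_cancel)
  ultimately show False using r by simp
qed

lemma part1:
  fixes m :: "'a::comm_ring_1 set" and p :: nat
  assumes N: "noetherian_ring TYPE('a)" and L: "local_ring_max m"
    and p: "prime p" and D: "depth_zero m"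
    and fc: "free_complex rk d" and mc: "minimal_complex m rk d"
    and r: "real r > log (real p) (real (cR m))"
  shows "frob_homology_zero p r rk d j \<longleftrightarrow> rk j = 0"
proof
  assume rk0: "rk j = 0"
  show "frob_homology_zero p r rk d j"
    unfolding frob_homology_zero_def
  proof (intro ballI impI)
    fix v :: "nat \<Rightarrow> 'a" assume "v \<in> vecs (rk j)"
    then have v0: "v = (\<lambda>_. 0)" using rk0 unfolding vecs_def by auto
    have "(\<lambda>_. 0) \<in> vecs (rk (j + 1))" unfolding vecs_def by simp
    moreover have "mat_app (rk j) (rk (j + 1)) (frob_mat p r (d (j + 1))) (\<lambda>_. 0) = v"
      unfolding v0 mat_app_def using rk0 by simp
    ultimately show "\<exists>w\<in>vecs (rk (j + 1)). mat_app (rk j) (rk (j + 1)) (frob_mat p r (d (j + 1))) w = v"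
      by blast
  qed
next
  assume H: "frob_homology_zero p r rk d j"
  show "rk j = 0"
  proof (rule ccontr)
    assume rk0: "rk j \<noteq> 0"
    obtain x where cpos: "cR m > 0" and x: "\<forall>a\<in>m. a * x = 0" "x \<notin> ideal_pow m (cR m)"
      using cR_props[OF N L D] by blast
    define q where "q = p ^ r"
    have q0: "q > 0" unfolding q_def using prime_gt_0_nat[OF p] by simp
    have cq: "cR m \<le> q" using cR_less[OF p cpos r] unfolding q_def by simp
    have idm: "ideal m" using L by (rule local_ideal)
    have powm: "a ^ q \<in> m" if "a \<in> m" for a
    proof -
      have "a ^ q = a * a ^ (q - 1)" using q0 by (simp flip: power_Suc)
      then show ?thesis using that ideal_multR[OF idm] by metis
    qed
    define v where "v = (\<lambda>k::nat. if k = 0 then x else (0::'a))"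
    have vv: "v \<in> vecs (rk j)" unfolding vecs_def v_def using rk0 by simp
    have "mat_app (rk (j - 1)) (rk j) (frob_mat p r (d j)) v = (\<lambda>_. 0)"
    proof
      fix i
      show "mat_app (rk (j - 1)) (rk j) (frob_mat p r (d j)) v i = 0"
      proof (cases "i < rk (j - 1)")
        case True
        have "(\<Sum>k<rk j. frob_mat p r (d j) i k * v k) = (\<Sum>k<rk j. if k = 0 then frob_mat p r (d j) i k * x else 0)"
          by (rule sum.cong) (simp_all add: v_def)
        also have "\<dots> = frob_mat p r (d j) i 0 * x"
          using rk0 by (simp add: sum.delta)
        also have "\<dots> = 0"
        proof -
          have "d j i 0 \<in> m" using mc True rk0 unfolding minimal_complex_def by simp
          then have "d j i 0 ^ q \<in> m" by (rule powm)
          then show ?thesis using x(1) unfolding frob_mat_def q_def by blast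
        qed
        finally show ?thesis unfolding mat_app_def using True by simp
      qed (simp add: mat_app_def)
    qed
    then obtain w where w: "w \<in> vecs (rk (j + 1))"
      "mat_app (rk j) (rk (j + 1)) (frob_mat p r (d (j + 1))) w = v"
      using H vv unfolding frob_homology_zero_def by blast
    have "x = mat_app (rk j) (rk (j + 1)) (frob_mat p r (d (j + 1))) w 0"
      using w(2) by (simp add: v_def)
    also have "\<dots> = (\<Sum>k<rk (j + 1). d (j + 1) 0 k ^ q * w k)"
      using rk0 unfolding mat_app_def frob_mat_def q_def by simp
    also have "\<dots> \<in> ideal_pow m q"
    proof (rule ideal_sum[OF ideal_pow_ideal])
      fix k assume "k \<in> {..<rk (j + 1)}"
      then have "d (j + 1) 0 k \<in> m" using mc rk0 unfolding minimal_complex_def by simp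
      then have "d (j + 1) 0 k ^ q \<in> ideal_pow m q" by (rule pow_in_ideal_pow)
      then show "d (j + 1) 0 k ^ q * w k \<in> ideal_pow m q" by (rule ideal_multR[OF ideal_pow_ideal])
    qed
    also have "\<dots> \<subseteq> ideal_pow m (cR m)" by (rule ideal_pow_antimono[OF cq])
    finally show False using x(2) by blast
  qed
qed

definition sc :: "'a::comm_ring_1 \<Rightarrow> (nat \<Rightarrow> 'a) \<Rightarrow> (nat \<Rightarrow> 'a)" where "sc c v = (\<lambda>k. c * v k)"
definition ev :: "nat \<Rightarrow> (nat \<Rightarrow> 'a::comm_ring_1)" where "ev i = (\<lambda>k. if k = i then 1 else 0)"
definition vsupp :: "nat set \<Rightarrow> (nat \<Rightarrow> 'a::comm_ring_1) set" where "vsupp I = {v. \<forall>k. k \<notin> I \<longrightarrow> v k = 0}"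
definition linV :: "((nat \<Rightarrow> 'a::comm_ring_1) \<Rightarrow> (nat \<Rightarrow> 'a)) \<Rightarrow> bool" where
  "linV f \<longleftrightarrow> (\<forall>v w. f (v + w) = f v + f w) \<and> (\<forall>c v. f (sc c v) = sc c (f v))"
definition linF :: "((nat \<Rightarrow> 'a::comm_ring_1) \<Rightarrow> 'a) \<Rightarrow> bool" where
  "linF f \<longleftrightarrow> (\<forall>v w. f (v + w) = f v + f w) \<and> (\<forall>c v. f (sc c v) = c * f v)"

lemma sc_apply[simp]: "sc c v k = c * v k" by (simp add: sc_def)
lemma sc_zero[simp]: "sc c 0 = 0" by (simp add: sc_def fun_eq_iff)
lemma sc_0_left[simp]: "sc 0 v = 0" by (simp add: sc_def fun_eq_iff)
lemma sc_1_left[simp]: "sc 1 v = v" by (simp add: sc_def fun_eq_iff)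
lemma ev_apply: "ev i k = (if k = i then 1 else 0)" by (simp add: ev_def)
lemma ev_same[simp]: "ev i i = 1" by (simp add: ev_def)
lemma ev_other[simp]: "k \<noteq> i \<Longrightarrow> ev i k = 0" by (simp add: ev_def)

lemma vsupp_iff: "v \<in> vsupp I \<longleftrightarrow> (\<forall>k. k \<notin> I \<longrightarrow> v k = 0)" by (simp add: vsupp_def)
lemma vsuppD: "v \<in> vsupp I \<Longrightarrow> k \<notin> I \<Longrightarrow> v k = 0" by (simp add: vsupp_def)
lemma vsupp_mono: "I \<subseteq> I' \<Longrightarrow> v \<in> vsupp I \<Longrightarrow> v \<in> vsupp I'" by (auto simp: vsupp_def)
lemma ev_vsupp: "i \<in> I \<Longrightarrow> ev i \<in> vsupp I" by (auto simp: vsupp_def ev_def)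
lemma vsupp_0[simp]: "0 \<in> vsupp I" by (simp add: vsupp_def)
lemma vsupp_add: "v \<in> vsupp I \<Longrightarrow> w \<in> vsupp I \<Longrightarrow> v + w \<in> vsupp I" by (simp add: vsupp_def)
lemma vsupp_diff: "v \<in> vsupp I \<Longrightarrow> w \<in> vsupp I \<Longrightarrow> v - w \<in> vsupp I" by (simp add: vsupp_def)
lemma vsupp_sc: "v \<in> vsupp I \<Longrightarrow> sc c v \<in> vsupp I" by (simp add: vsupp_def)
lemma vsupp_empty: "v \<in> vsupp {} \<Longrightarrow> v = 0" by (auto simp: vsupp_def)

lemma linV_add: "linV f \<Longrightarrow> f (v + w) = f v + f w" by (simp add: linV_def)
lemma linV_sc: "linV f \<Longrightarrow> f (sc c v) = sc c (f v)" by (simp add: linV_def)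
lemma linV_0: "linV f \<Longrightarrow> f 0 = 0"
  using linV_add[of f 0 0] by simp
lemma neg_fun: "(- v) = (\<lambda>k. - (v k :: 'a::comm_ring_1))" by (rule ext) simp
lemma linV_neg: "linV f \<Longrightarrow> f (- v) = - f v"
  using linV_sc[of f "-1" v] by (simp add: sc_def neg_fun)
lemma linV_diff: "linV f \<Longrightarrow> f (v - w) = f v - f w"
  using linV_add[of f v "- w"] linV_neg[of f w] by simp
lemma linF_add: "linF f \<Longrightarrow> f (v + w) = f v + f w" by (simp add: linF_def)
lemma linF_sc: "linF f \<Longrightarrow> f (sc c v) = c * f v" by (simp add: linF_def)
lemma linF_0: "linF f \<Longrightarrow> f 0 = 0"
  using linF_add[of f 0 0] by simp
lemma linF_neg: "linF f \<Longrightarrow> f (- v) = - f v"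
  using linF_sc[of f "-1" v] by (simp add: sc_def neg_fun)
lemma linF_diff: "linF f \<Longrightarrow> f (v - w) = f v - f w"
  using linF_add[of f v "- w"] linF_neg[of f w] by simp

lemma linV_comp: "linV f \<Longrightarrow> linV g \<Longrightarrow> linV (\<lambda>v. f (g v))"
  by (simp add: linV_def)
lemma linF_compV: "linF f \<Longrightarrow> linV g \<Longrightarrow> linF (\<lambda>v. f (g v))"
  by (simp add: linV_def linF_def)
lemma linV_id: "linV (\<lambda>v. v)" by (simp add: linV_def)
lemma linV_zero: "linV (\<lambda>v. 0)" by (simp add: linV_def sc_def fun_eq_iff)
lemma linV_plus: "linV f \<Longrightarrow> linV g \<Longrightarrow> linV (\<lambda>v. f v + g v)"
  by (simp add: linV_def sc_def fun_eq_iff algebra_simps)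
lemma linV_minus: "linV f \<Longrightarrow> linV g \<Longrightarrow> linV (\<lambda>v. f v - g v)"
  by (simp add: linV_def sc_def fun_eq_iff algebra_simps)
lemma linV_rank1: "linF f \<Longrightarrow> linV (\<lambda>v. sc (f v) b)"
  by (simp add: linV_def linF_def sc_def fun_eq_iff algebra_simps)
lemma linF_minus: "linF f \<Longrightarrow> linF g \<Longrightarrow> linF (\<lambda>v. f v - g v)"
  by (simp add: linF_def algebra_simps)
lemma linF_coord: "linF (\<lambda>v. v k)" by (simp add: linF_def)
lemma linF_coordV: "linV f \<Longrightarrow> linF (\<lambda>v. f v k)"
  by (simp add: linV_def linF_def)
lemma linF_scale: "linF f \<Longrightarrow> linF (\<lambda>v. c * f v)"
  by (simp add: linF_def algebra_simps)
lemma linV_join: "linV f \<Longrightarrow> linV g \<Longrightarrow> linV (\<lambda>v. (\<lambda>k. if even k then f v (k div 2) else g v (k div 2)))"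
  by (simp add: linV_def sc_def fun_eq_iff)

lemma sum_fun_apply: "(sum g A) k = (\<Sum>i\<in>A. g i k)"
  by (induct A rule: infinite_finite_induct) auto

lemma linF_sum: "linF f \<Longrightarrow> f (sum g A) = (\<Sum>i\<in>A. f (g i))"
  by (induct A rule: infinite_finite_induct) (auto simp: linF_0 linF_add)

lemma vsupp_expand: "finite I \<Longrightarrow> v \<in> vsupp I \<Longrightarrow> v = (\<Sum>i\<in>I. sc (v i) (ev i))"
proof (rule ext)
  fix k assume fI: "finite I" and v: "v \<in> vsupp I"
  have "(\<Sum>i\<in>I. sc (v i) (ev i)) k = (\<Sum>i\<in>I. if k = i then v k else 0)"
    unfolding sum_fun_apply by (rule sum.cong) (auto simp: ev_def)
  also have "\<dots> = v k" using fI vsuppD[OF v] by (simp add: sum.delta)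
  finally show "v k = (\<Sum>i\<in>I. sc (v i) (ev i)) k" by simp
qed

lemma linF_expand: "finite I \<Longrightarrow> linF f \<Longrightarrow> v \<in> vsupp I \<Longrightarrow> f v = (\<Sum>i\<in>I. f (ev i) * v i)"
proof -
  assume a: "finite I" "linF f" "v \<in> vsupp I"
  have "f v = f (\<Sum>i\<in>I. sc (v i) (ev i))" using vsupp_expand[OF a(1,3)] by simp
  also have "\<dots> = (\<Sum>i\<in>I. v i * f (ev i))" by (simp add: linF_sum[OF a(2)] linF_sc[OF a(2)])
  finally show ?thesis by (simp add: mult.commute)
qed

lemma reg_lemma:
  fixes m :: "'a::comm_ring_1 set" and A B :: "(nat \<Rightarrow> 'a) \<Rightarrow> (nat \<Rightarrow> 'a)"
  assumes idm: "ideal m" and one: "1 \<notin> m" and unit: "\<And>a. a \<notin> m \<Longrightarrow> \<exists>u. u * a = 1"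
  shows "finite I \<Longrightarrow> linV A \<Longrightarrow> linV B \<Longrightarrow> (\<forall>w\<in>vsupp J. A w \<in> vsupp I)
    \<Longrightarrow> (\<forall>w\<in>vsupp J. B (A w) = 0)
    \<Longrightarrow> (\<forall>v\<in>vsupp I. \<forall>\<mu>. linF \<mu> \<and> (\<forall>k. B v k \<in> m) \<and> (\<forall>l\<in>J. \<mu> (A (ev l)) \<in> m) \<longrightarrow> \<mu> v \<in> m)
    \<Longrightarrow> \<exists>h. linV h \<and> (\<forall>y. h y \<in> vsupp I) \<and> (\<forall>v\<in>vsupp I. B (h (B v)) = B v)"
proof (induction "card I" arbitrary: I A B rule: less_induct)
  case less
  note fI = less.prems(1) and lA = less.prems(2) and lB = less.prems(3)
    and AI = less.prems(4) and BA = less.prems(5) and star = less.prems(6)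
  show ?case
  proof (cases "\<exists>i\<in>I. \<exists>k. B (ev i) k \<notin> m")
    case True
    then obtain i k where i: "i \<in> I" and ik: "B (ev i) k \<notin> m" by blast
    obtain u where u: "u * B (ev i) k = 1" using unit[OF ik] by blast
    define \<beta> where "\<beta> = B (ev i)"
    define lam where "lam y = u * y k" for y :: "nat \<Rightarrow> 'a"
    define \<pi> where "\<pi> y = y - sc (lam y) \<beta>" for y
    define \<sigma> where "\<sigma> w = w - sc (lam (B w)) (ev i)" for w
    define \<rho> where "\<rho> x = x - sc (x i) (ev i)" for x :: "nat \<Rightarrow> 'a"
    define I' where "I' = I - {i}"
    define A' where "A' w = \<rho> (A w)" for w
    define B' where "B' w = \<pi> (B w)" for w
    have lam1: "lam \<beta> = 1" unfolding lam_def \<beta>_def using u by simp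
    have llam: "linF lam" unfolding lam_def by (rule linF_scale[OF linF_coord])
    have pib: "\<pi> \<beta> = 0" unfolding \<pi>_def lam1 by (simp add: sc_def)
    have lpi: "linV \<pi>" unfolding \<pi>_def by (rule linV_minus[OF linV_id linV_rank1[OF llam]])
    have lsig: "linV \<sigma>" unfolding \<sigma>_def
      by (rule linV_minus[OF linV_id linV_rank1[OF linF_compV[OF llam lB]]])
    have lrho: "linV \<rho>" unfolding \<rho>_def by (rule linV_minus[OF linV_id linV_rank1[OF linF_coord]])
    have lA': "linV A'" unfolding A'_def by (rule linV_comp[OF lrho lA])
    have lB': "linV B'" unfolding B'_def by (rule linV_comp[OF lpi lB])
    have rho_supp: "\<rho> v \<in> vsupp I'" if "v \<in> vsupp I" for v
      using that unfolding \<rho>_def I'_def vsupp_iff by (auto simp: ev_def)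
    have rho_id: "\<rho> v = v" if "v \<in> vsupp I'" for v
      using that unfolding \<rho>_def I'_def vsupp_iff by (auto simp: fun_eq_iff ev_def)
    have rho_ei: "\<rho> (ev i) = 0" unfolding \<rho>_def by (simp add: fun_eq_iff ev_def)
    have Bsig: "B (\<sigma> w) = \<pi> (B w)" for w
      unfolding \<sigma>_def \<pi>_def \<beta>_def by (simp add: linV_diff[OF lB] linV_sc[OF lB])
    have fI': "finite I'" unfolding I'_def using fI by simp
    have cI': "card I' < card I" unfolding I'_def by (rule card_Diff1_less[OF fI i])
    have AI': "\<forall>w\<in>vsupp J. A' w \<in> vsupp I'" using AI rho_supp unfolding A'_def by blast
    have BA': "\<forall>w\<in>vsupp J. B' (A' w) = 0"
    proof
      fix w :: "nat \<Rightarrow> 'a" assume w: "w \<in> vsupp J"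
      have "B (A' w) = B (A w) - sc (A w i) \<beta>"
        unfolding A'_def \<rho>_def \<beta>_def by (simp add: linV_diff[OF lB] linV_sc[OF lB])
      also have "\<dots> = - sc (A w i) \<beta>" using BA w by simp
      also have "\<dots> = sc (- A w i) \<beta>" by (simp add: sc_def fun_eq_iff)
      finally have e: "B (A' w) = sc (- A w i) \<beta>" .
      have "B' (A' w) = sc (- A w i) (\<pi> \<beta>)" unfolding B'_def e by (rule linV_sc[OF lpi])
      then show "B' (A' w) = 0" by (simp add: pib sc_def fun_eq_iff)
    qed
    have star': "\<forall>v\<in>vsupp I'. \<forall>\<mu>. linF \<mu> \<and> (\<forall>k. B' v k \<in> m) \<and> (\<forall>l\<in>J. \<mu> (A' (ev l)) \<in> m) \<longrightarrow> \<mu> v \<in> m"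
    proof (intro ballI allI impI)
      fix v :: "nat \<Rightarrow> 'a" and \<mu> :: "(nat \<Rightarrow> 'a) \<Rightarrow> 'a" assume v: "v \<in> vsupp I'" and H: "linF \<mu> \<and> (\<forall>k. B' v k \<in> m) \<and> (\<forall>l\<in>J. \<mu> (A' (ev l)) \<in> m)"
      define v0 where "v0 = \<sigma> v"
      have v0s: "v0 \<in> vsupp I" unfolding v0_def \<sigma>_def
        using vsupp_mono[OF _ v] i unfolding I'_def by (intro vsupp_diff vsupp_sc ev_vsupp) auto
      have "B v0 = B' v" unfolding v0_def B'_def by (rule Bsig)
      then have Bv0: "\<forall>k. B v0 k \<in> m" using H by simp
      have lmu0: "linF (\<lambda>x. \<mu> (\<rho> x))" using H by (intro linF_compV[OF _ lrho]) simp
      have "\<forall>l\<in>J. \<mu> (\<rho> (A (ev l))) \<in> m" using H unfolding A'_def by blast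
      then have "\<mu> (\<rho> v0) \<in> m" using star v0s lmu0 Bv0 by blast
      moreover have "\<rho> v0 = v" unfolding v0_def \<sigma>_def
        by (simp add: linV_diff[OF lrho] linV_sc[OF lrho] rho_ei rho_id[OF v])
      ultimately show "\<mu> v \<in> m" by simp
    qed
    obtain h' where h': "linV h'" "\<forall>y. h' y \<in> vsupp I'" "\<forall>v\<in>vsupp I'. B' (h' (B' v)) = B' v"
      using less.hyps[OF cI' fI' lA' lB' AI' BA' star'] by blast
    define h where "h y = sc (lam y) (ev i) + \<sigma> (h' (\<pi> y))" for y
    have lh: "linV h" unfolding h_def
      by (rule linV_plus[OF linV_rank1[OF llam] linV_comp[OF lsig linV_comp[OF h'(1) lpi]]])
    have hs: "\<forall>y. h y \<in> vsupp I"
    proof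
      fix y :: "nat \<Rightarrow> 'a"
      have "h' (\<pi> y) \<in> vsupp I" using h'(2) vsupp_mono[of I' I] unfolding I'_def by blast
      then show "h y \<in> vsupp I" unfolding h_def \<sigma>_def
        using i by (intro vsupp_add vsupp_sc vsupp_diff ev_vsupp) auto
    qed
    have "B (h (B v)) = B v" if v: "v \<in> vsupp I" for v
    proof -
      define y where "y = B v"
      define w0 where "w0 = \<rho> v"
      have w0s: "w0 \<in> vsupp I'" unfolding w0_def by (rule rho_supp[OF v])
      have "B' w0 = \<pi> (B v - sc (v i) \<beta>)"
        unfolding B'_def w0_def \<rho>_def \<beta>_def by (simp add: linV_diff[OF lB] linV_sc[OF lB])
      also have "\<dots> = \<pi> y" unfolding y_def by (simp add: linV_diff[OF lpi] linV_sc[OF lpi] pib)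
      finally have pw: "B' w0 = \<pi> y" .
      have "B (h y) = sc (lam y) \<beta> + B (\<sigma> (h' (\<pi> y)))"
        unfolding h_def \<beta>_def by (simp add: linV_add[OF lB] linV_sc[OF lB])
      also have "B (\<sigma> (h' (\<pi> y))) = B' (h' (\<pi> y))" unfolding Bsig B'_def ..
      also have "\<dots> = B' (h' (B' w0))" by (simp only: pw)
      also have "\<dots> = B' w0" using h'(3) w0s by blast
      also have "\<dots> = \<pi> y" by (rule pw)
      finally have "B (h y) = sc (lam y) \<beta> + \<pi> y" .
      then show ?thesis unfolding y_def \<pi>_def by simp
    qed
    then show ?thesis using lh hs by blast
  next
    case False
    note nB = False
    show ?thesis
    proof (cases "\<exists>l\<in>J. \<exists>k\<in>I. A (ev l) k \<notin> m")
      case True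
      then obtain l k where l: "l \<in> J" and k: "k \<in> I" and lk: "A (ev l) k \<notin> m" by blast
      obtain u where u: "u * A (ev l) k = 1" using unit[OF lk] by blast
      define \<alpha> where "\<alpha> = A (ev l)"
      define \<tau> where "\<tau> v = v - sc (u * v k) \<alpha>" for v
      define I' where "I' = I - {k}"
      define A' where "A' w = \<tau> (A w)" for w
      have els: "ev l \<in> vsupp J" by (rule ev_vsupp[OF l])
      have as: "\<alpha> \<in> vsupp I" unfolding \<alpha>_def using AI els by blast
      have Ba: "B \<alpha> = 0" unfolding \<alpha>_def using BA els by blast
      have ltau: "linV \<tau>" unfolding \<tau>_def
        by (rule linV_minus[OF linV_id linV_rank1[OF linF_scale[OF linF_coord]]])
      have tau_supp: "\<tau> v \<in> vsupp I'" if "v \<in> vsupp I" for v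
      proof -
        have "\<tau> v k = 0" unfolding \<tau>_def using u unfolding \<alpha>_def
          by (simp add: algebra_simps) (metis mult.assoc mult.commute mult_1)
        moreover have "\<tau> v \<in> vsupp I" unfolding \<tau>_def using that as by (intro vsupp_diff vsupp_sc)
        ultimately show ?thesis unfolding I'_def vsupp_iff by auto
      qed
      have tau_id: "\<tau> v = v" if "v \<in> vsupp I'" for v
      proof -
        have "v k = 0" using that unfolding I'_def vsupp_iff by blast
        then show ?thesis unfolding \<tau>_def by (simp add: sc_def fun_eq_iff)
      qed
      have Btau: "B (\<tau> v) = B v" for v
        unfolding \<tau>_def by (simp add: linV_diff[OF lB] linV_sc[OF lB] Ba)
      have fI': "finite I'" unfolding I'_def using fI by simp
      have cI': "card I' < card I" unfolding I'_def by (rule card_Diff1_less[OF fI k])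
      have lA': "linV A'" unfolding A'_def by (rule linV_comp[OF ltau lA])
      have AI': "\<forall>w\<in>vsupp J. A' w \<in> vsupp I'" using AI tau_supp unfolding A'_def by blast
      have BA': "\<forall>w\<in>vsupp J. B (A' w) = 0" using BA unfolding A'_def Btau by blast
      have star': "\<forall>v\<in>vsupp I'. \<forall>\<mu>. linF \<mu> \<and> (\<forall>k. B v k \<in> m) \<and> (\<forall>l\<in>J. \<mu> (A' (ev l)) \<in> m) \<longrightarrow> \<mu> v \<in> m"
      proof (intro ballI allI impI)
        fix v :: "nat \<Rightarrow> 'a" and \<mu> :: "(nat \<Rightarrow> 'a) \<Rightarrow> 'a" assume v: "v \<in> vsupp I'" and H: "linF \<mu> \<and> (\<forall>k. B v k \<in> m) \<and> (\<forall>l\<in>J. \<mu> (A' (ev l)) \<in> m)"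
        have vs: "v \<in> vsupp I" using vsupp_mono[OF _ v] unfolding I'_def by blast
        have lmu0: "linF (\<lambda>x. \<mu> (\<tau> x))" using H by (intro linF_compV[OF _ ltau]) simp
        have "\<forall>l\<in>J. \<mu> (\<tau> (A (ev l))) \<in> m" using H unfolding A'_def by blast
        then have "\<mu> (\<tau> v) \<in> m" using star vs lmu0 H by blast
        then show "\<mu> v \<in> m" using tau_id[OF v] by simp
      qed
      obtain h' where h': "linV h'" "\<forall>y. h' y \<in> vsupp I'" "\<forall>v\<in>vsupp I'. B (h' (B v)) = B v"
        using less.hyps[OF cI' fI' lA' lB AI' BA' star'] by blast
      have hs: "\<forall>y. h' y \<in> vsupp I" using h'(2) vsupp_mono[of I' I] unfolding I'_def by blast
      have "B (h' (B v)) = B v" if v: "v \<in> vsupp I" for v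
      proof -
        have "B (h' (B (\<tau> v))) = B (\<tau> v)" using h'(3) tau_supp[OF v] by blast
        then show ?thesis unfolding Btau .
      qed
      then show ?thesis using h'(1) hs by blast
    next
      case False
      note nA = False
      show ?thesis
      proof (cases "I = {}")
        case True
        have "linV (\<lambda>y. 0)" by (rule linV_zero)
        moreover have "\<forall>y. (\<lambda>y. 0) y \<in> vsupp I" by simp
        moreover have "\<forall>v\<in>vsupp I. B ((\<lambda>y. 0) (B v)) = B v"
          using True vsupp_empty by blast
        ultimately show ?thesis by blast
      next
        case False
        then obtain i where i: "i \<in> I" by blast
        have "\<forall>k. B (ev i) k \<in> m" using nB i by blast
        moreover have "\<forall>l\<in>J. (\<lambda>x. x i) (A (ev l)) \<in> m" using nA i by blast
        ultimately have "(\<lambda>x. x i) (ev i) \<in> m"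
          using star ev_vsupp[OF i] linF_coord[of i] by blast
        then show ?thesis using one by simp
      qed
    qed
  qed
qed

lemma split_inj:
  fixes m :: "'a::comm_ring_1 set" and \<phi> :: "(nat \<Rightarrow> 'a) \<Rightarrow> (nat \<Rightarrow> 'a)"
  assumes unit: "\<And>a. a \<notin> m \<Longrightarrow> \<exists>u. u * a = 1" and x0: "x \<noteq> 0" and xs: "\<forall>a\<in>m. a * x = 0"
  shows "finite I \<Longrightarrow> linV \<phi> \<Longrightarrow> (\<forall>v\<in>vsupp I. \<phi> v = 0 \<longrightarrow> v = 0)
    \<Longrightarrow> \<exists>\<psi>. linV \<psi> \<and> (\<forall>y. \<psi> y \<in> vsupp I) \<and> (\<forall>v\<in>vsupp I. \<psi> (\<phi> v) = v)"
proof (induction I arbitrary: \<phi> rule: finite_induct)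
  case empty
  have "linV (\<lambda>y. 0)" by (rule linV_zero)
  moreover have "\<forall>v\<in>vsupp {}. (\<lambda>y. 0) (\<phi> v) = v" using vsupp_empty by force
  moreover have "\<forall>y. (\<lambda>y. 0) y \<in> vsupp {}" by simp
  ultimately show ?case by blast
next
  case (insert i I0)
  note fI0 = insert.hyps(1) and iI0 = insert.hyps(2) and l\<phi> = insert.prems(1) and inj = insert.prems(2)
  define \<beta> where "\<beta> = \<phi> (ev i)"
  have "\<exists>k. \<beta> k \<notin> m"
  proof (rule ccontr)
    assume "\<not> ?thesis"
    then have "\<forall>k. \<beta> k \<in> m" by blast
    then have "\<phi> (sc x (ev i)) = 0" unfolding linV_sc[OF l\<phi>] \<beta>_def[symmetric]
      using xs by (auto simp: fun_eq_iff mult.commute[of x])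
    moreover have "sc x (ev i) \<in> vsupp (insert i I0)" by (intro vsupp_sc ev_vsupp) simp
    ultimately have "sc x (ev i) = 0" using inj by blast
    then have "sc x (ev i) i = 0" by simp
    then show False using x0 by simp
  qed
  then obtain k where k: "\<beta> k \<notin> m" by blast
  obtain u where u: "u * \<beta> k = 1" using unit[OF k] by blast
  define lam where "lam y = u * y k" for y :: "nat \<Rightarrow> 'a"
  define \<pi> where "\<pi> y = y - sc (lam y) \<beta>" for y
  have lam1: "lam \<beta> = 1" unfolding lam_def using u by simp
  have llam: "linF lam" unfolding lam_def by (rule linF_scale[OF linF_coord])
  have pib: "\<pi> \<beta> = 0" unfolding \<pi>_def lam1 by (simp add: sc_def)
  have lpi: "linV \<pi>" unfolding \<pi>_def by (rule linV_minus[OF linV_id linV_rank1[OF llam]])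
  define \<phi>' where "\<phi>' v = \<pi> (\<phi> v)" for v
  have l\<phi>': "linV \<phi>'" unfolding \<phi>'_def by (rule linV_comp[OF lpi l\<phi>])
  have sub: "vsupp I0 \<subseteq> vsupp (insert i I0)" using vsupp_mono[of I0 "insert i I0"] by blast
  have inj': "\<forall>v\<in>vsupp I0. \<phi>' v = 0 \<longrightarrow> v = 0"
  proof (intro ballI impI)
    fix v assume v: "v \<in> vsupp I0" and z: "\<phi>' v = 0"
    define c where "c = lam (\<phi> v)"
    have "\<phi> v = sc c \<beta>" using z unfolding \<phi>'_def \<pi>_def c_def by simp
    moreover have "\<phi> (v - sc c (ev i)) = \<phi> v - sc c \<beta>"
      by (simp only: linV_diff[OF l\<phi>] linV_sc[OF l\<phi>] \<beta>_def)
    ultimately have "\<phi> (v - sc c (ev i)) = 0" by simp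
    moreover have "v - sc c (ev i) \<in> vsupp (insert i I0)"
      using v sub by (intro vsupp_diff vsupp_sc ev_vsupp) auto
    ultimately have e0: "v - sc c (ev i) = 0" using inj by blast
    have "v i = 0" using vsuppD[OF v iI0] .
    then have "c = 0" using fun_cong[OF e0, of i] by simp
    then show "v = 0" using e0 by simp
  qed
  obtain \<psi>' where \<psi>': "linV \<psi>'" "\<forall>y. \<psi>' y \<in> vsupp I0" "\<forall>v\<in>vsupp I0. \<psi>' (\<phi>' v) = v"
    using insert.IH[OF l\<phi>' inj'] by blast
  define \<psi> where "\<psi> y = \<psi>' (\<pi> y) + sc (lam y - lam (\<phi> (\<psi>' (\<pi> y)))) (ev i)" for y
  have l\<psi>: "linV \<psi>" unfolding \<psi>_def
    by (intro linV_plus linV_comp[OF \<psi>'(1) lpi] linV_rank1 linF_minus llam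
        linF_compV[OF llam linV_comp[OF l\<phi> linV_comp[OF \<psi>'(1) lpi]]])
  have s\<psi>: "\<forall>y. \<psi> y \<in> vsupp (insert i I0)"
  proof
    fix y
    show "\<psi> y \<in> vsupp (insert i I0)" unfolding \<psi>_def
      using \<psi>'(2) sub by (intro vsupp_add vsupp_sc ev_vsupp) auto
  qed
  have "\<psi> (\<phi> v) = v" if v: "v \<in> vsupp (insert i I0)" for v
  proof -
    define v0 where "v0 = v - sc (v i) (ev i)"
    have v0s: "v0 \<in> vsupp I0" unfolding v0_def using v iI0
      by (auto simp: vsupp_iff ev_def)
    have vv: "v = v0 + sc (v i) (ev i)" unfolding v0_def by simp
    have "\<phi> v = \<phi> (v0 + sc (v i) (ev i))" by (rule arg_cong[OF vv])
    also have "\<dots> = \<phi> v0 + sc (v i) \<beta>"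
      by (simp only: linV_add[OF l\<phi>] linV_sc[OF l\<phi>] \<beta>_def)
    finally have pv: "\<phi> v = \<phi> v0 + sc (v i) \<beta>" .
    have "\<pi> (\<phi> v) = \<phi>' v0" unfolding pv \<phi>'_def by (simp add: linV_add[OF lpi] linV_sc[OF lpi] pib)
    then have ps: "\<psi>' (\<pi> (\<phi> v)) = v0" using \<psi>'(3) v0s by simp
    have "lam (\<phi> v) = lam (\<phi> v0) + v i" unfolding pv by (simp add: linF_add[OF llam] linF_sc[OF llam] lam1)
    then have "lam (\<phi> v) - lam (\<phi> (\<psi>' (\<pi> (\<phi> v)))) = v i" unfolding ps by simp
    then have "\<psi> (\<phi> v) = v0 + sc (v i) (ev i)" unfolding \<psi>_def ps by simp
    then show ?thesis by (simp only: vv[symmetric])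
  qed
  then show ?case using l\<psi> s\<psi> by blast
qed

definition join :: "(nat \<Rightarrow> 'a) \<Rightarrow> (nat \<Rightarrow> 'a) \<Rightarrow> (nat \<Rightarrow> 'a)" where
  "join a b = (\<lambda>k. if even k then a (k div 2) else b (k div 2))"

lemma join_zero: "join a b = (0 :: nat \<Rightarrow> 'a::zero) \<Longrightarrow> a = 0 \<and> b = 0"
proof -
  assume z: "join a b = 0"
  have "a k = 0" for k using fun_cong[OF z, of "2 * k"] by (simp add: join_def)
  moreover have "b k = 0" for k using fun_cong[OF z, of "2 * k + 1"] by (simp add: join_def)
  ultimately show ?thesis by (simp add: fun_eq_iff)
qed

lemma dstep:
  fixes m :: "'a::comm_ring_1 set" and d d' h :: "(nat \<Rightarrow> 'a) \<Rightarrow> (nat \<Rightarrow> 'a)"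
  assumes unit: "\<And>a. a \<notin> m \<Longrightarrow> \<exists>u. u * a = 1" and x0: "x \<noteq> 0" and xs: "\<forall>a\<in>m. a * x = 0"
    and fI0: "finite I0" and ld: "linV d" and ld': "linV d'"
    and d'I: "\<forall>w\<in>vsupp I1. d' w \<in> vsupp I0"
    and lh: "linV h" and hI: "\<forall>y. h y \<in> vsupp I1" and hreg: "\<forall>w\<in>vsupp I1. d' (h (d' w)) = d' w"
    and ex: "\<forall>v\<in>vsupp I0. d v = 0 \<longrightarrow> (\<exists>w\<in>vsupp I1. d' w = v)"
    and cx: "\<forall>w\<in>vsupp I1. d (d' w) = 0"
  shows "\<exists>h0. linV h0 \<and> (\<forall>y. h0 y \<in> vsupp I0) \<and> (\<forall>v\<in>vsupp I0. d (h0 (d v)) = d v)"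
proof -
  define e where "e v = v - d' (h v)" for v
  have le: "linV e" unfolding e_def by (rule linV_minus[OF linV_id linV_comp[OF ld' lh]])
  have es: "e v \<in> vsupp I0" if "v \<in> vsupp I0" for v
    unfolding e_def using that d'I hI by (intro vsupp_diff) auto
  define \<Phi> where "\<Phi> v = join (d (e v)) (d' (h v))" for v
  have l\<Phi>: "linV \<Phi>" unfolding \<Phi>_def join_def
    by (rule linV_join[OF linV_comp[OF ld le] linV_comp[OF ld' lh]])
  have inj: "\<forall>v\<in>vsupp I0. \<Phi> v = 0 \<longrightarrow> v = 0"
  proof (intro ballI impI)
    fix v assume v: "v \<in> vsupp I0" and z: "\<Phi> v = 0"
    then have z1: "d (e v) = 0" and z2: "d' (h v) = 0" using join_zero unfolding \<Phi>_def by blast+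
    have ev: "e v = v" unfolding e_def z2 by simp
    then have "d v = 0" using z1 by simp
    then obtain w where w: "w \<in> vsupp I1" "d' w = v" using ex v by blast
    have "d' (h v) = v" using hreg w by blast
    then show "v = 0" using z2 by simp
  qed
  obtain \<Psi> where \<Psi>: "linV \<Psi>" "\<forall>y. \<Psi> y \<in> vsupp I0" "\<forall>v\<in>vsupp I0. \<Psi> (\<Phi> v) = v"
    using split_inj[OF unit x0 xs fI0 l\<Phi> inj] by blast
  define h0 where "h0 y = e (\<Psi> (join y 0))" for y
  have lh0: "linV h0" unfolding h0_def
  proof (rule linV_comp[OF le linV_comp[OF \<Psi>(1)]])
    show "linV (\<lambda>y. join y 0)" unfolding join_def by (simp add: linV_def sc_def fun_eq_iff)
  qed
  have h0s: "\<forall>y. h0 y \<in> vsupp I0" unfolding h0_def using \<Psi>(2) es by blast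
  have "d (h0 (d v)) = d v" if v: "v \<in> vsupp I0" for v
  proof -
    have hv: "h v \<in> vsupp I1" using hI by blast
    have "d' (h (e v)) = d' (h v) - d' (h (d' (h v)))"
      unfolding e_def by (simp add: linV_diff[OF lh] linV_diff[OF ld'])
    also have "\<dots> = 0" using hreg hv by simp
    finally have dh: "d' (h (e v)) = 0" .
    have eev: "e (e v) = e v" using dh unfolding e_def[of "e v"] by simp
    have dev: "d (e v) = d v" unfolding e_def using cx hv by (simp add: linV_diff[OF ld])
    have "\<Phi> (e v) = join (d v) 0" unfolding \<Phi>_def eev dev dh ..
    then have "\<Psi> (join (d v) 0) = e v" using \<Psi>(3) es[OF v] by metis
    then have "h0 (d v) = e v" unfolding h0_def using eev by simp
    then show ?thesis using dev by simp
  qed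
  then show ?thesis using lh0 h0s by blast
qed

lemma vecs_vsupp: "vecs n = vsupp {..<n}"
  by (auto simp: vecs_def vsupp_def)

lemma linV_mat: "linV (mat_app a b M)"
  unfolding linV_def mat_app_def
  by (auto simp: fun_eq_iff sum.distrib sum_distrib_left distrib_left mult.left_commute)

lemma mat_vsupp: "mat_app a b M v \<in> vsupp {..<a}"
  by (simp add: mat_app_def vsupp_def)

lemma mat_app_ev: "l < b \<Longrightarrow> mat_app a b M (ev l) = (\<lambda>i. if i < a then M i l else 0)"
  unfolding mat_app_def by (auto simp: fun_eq_iff ev_def if_distrib[of "\<lambda>z. _ * z"] sum.delta cong: if_cong)

lemma proj_lemma:
  fixes smul :: "'a::comm_ring_1 \<Rightarrow> 'm::ab_group_add \<Rightarrow> 'm" and d1 :: "nat \<Rightarrow> nat \<Rightarrow> 'a"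
  assumes md: "module smul"
    and fr1: "\<forall>x. \<exists>v\<in>vecs n0. (\<Sum>k<n0. smul (v k) (g k)) = x"
    and fr2: "\<forall>v\<in>vecs n0. (\<Sum>k<n0. smul (v k) (g k)) = 0 \<longleftrightarrow> (\<exists>w\<in>vecs n1. mat_app n0 n1 d1 w = v)"
    and lh: "linV h" and hI: "\<forall>y. h y \<in> vsupp {..<n1}"
    and hreg: "\<forall>w\<in>vsupp {..<n1}. mat_app n0 n1 d1 (h (mat_app n0 n1 d1 w)) = mat_app n0 n1 d1 w"
  shows "projective_module smul"
proof -
  interpret M: module smul by (rule md)
  define D where "D = mat_app n0 n1 d1"
  have lD: "linV D" unfolding D_def by (rule linV_mat)
  define \<epsilon> where "\<epsilon> v = (\<Sum>k<n0. smul (v k) (g k))" for v :: "nat \<Rightarrow> 'a"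
  have \<epsilon>_add: "\<epsilon> (v + w) = \<epsilon> v + \<epsilon> w" for v w
    unfolding \<epsilon>_def by (simp add: M.scale_left_distrib sum.distrib)
  have \<epsilon>_diff: "\<epsilon> (v - w) = \<epsilon> v - \<epsilon> w" for v w
    unfolding \<epsilon>_def by (simp add: M.scale_left_diff_distrib sum_subtractf)
  have \<epsilon>_sc: "\<epsilon> (sc c v) = smul c (\<epsilon> v)" for c v
    unfolding \<epsilon>_def by (simp only: sc_apply M.scale_sum_right M.scale_scale)
  have \<epsilon>D: "\<epsilon> (D w) = 0" if "w \<in> vecs n1" for w
  proof -
    have "D w \<in> vecs n0" unfolding D_def vecs_vsupp by (rule mat_vsupp)
    then show ?thesis using bspec[OF fr2 \<open>D w \<in> vecs n0\<close>] that unfolding \<epsilon>_def D_def by blast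
  qed
  define e where "e v = v - D (h v)" for v
  have le: "linV e" unfolding e_def by (rule linV_minus[OF linV_id linV_comp[OF lD lh]])
  have ekill: "e v = 0" if "v \<in> vecs n0" "\<epsilon> v = 0" for v
  proof -
    have "\<exists>w\<in>vecs n1. mat_app n0 n1 d1 w = v" using bspec[OF fr2 that(1)] that(2) unfolding \<epsilon>_def by simp
    then obtain w where w: "w \<in> vecs n1" "D w = v" unfolding D_def by blast
    have "D (h (D w)) = D w" using hreg w(1) unfolding D_def vecs_vsupp by blast
    then show ?thesis unfolding e_def using w(2) by simp
  qed
  define vx where "vx x = (SOME v. v \<in> vecs n0 \<and> \<epsilon> v = x)" for x
  have vx: "vx x \<in> vecs n0 \<and> \<epsilon> (vx x) = x" for x
  proof -
    have "\<exists>v. v \<in> vecs n0 \<and> \<epsilon> v = x" using fr1 unfolding \<epsilon>_def by blast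
    then show ?thesis unfolding vx_def by (rule someI_ex)
  qed
  define \<sigma> where "\<sigma> x = e (vx x)" for x
  have vecs_diff: "v - w \<in> vecs n0" if "v \<in> vecs n0" "w \<in> vecs n0" for v w
    using that unfolding vecs_vsupp by (rule vsupp_diff)
  have \<sigma>_add: "\<sigma> (x + y) = \<sigma> x + \<sigma> y" for x y
  proof -
    define z where "z = vx (x + y) - vx x - vx y"
    have "z \<in> vecs n0" unfolding z_def using vx vecs_diff by blast
    moreover have "\<epsilon> z = 0" unfolding z_def using vx by (simp add: \<epsilon>_diff)
    ultimately have "e z = 0" by (rule ekill)
    then show ?thesis unfolding z_def \<sigma>_def by (simp add: linV_diff[OF le] diff_eq_eq add_ac)
  qed
  have \<sigma>_sc: "\<sigma> (smul a x) = sc a (\<sigma> x)" for a x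
  proof -
    define z where "z = vx (smul a x) - sc a (vx x)"
    have "z \<in> vecs n0" unfolding z_def using vx vecs_diff vsupp_sc unfolding vecs_vsupp by blast
    moreover have "\<epsilon> z = 0" unfolding z_def using vx by (simp add: \<epsilon>_diff \<epsilon>_sc)
    ultimately have "e z = 0" by (rule ekill)
    then show ?thesis unfolding z_def \<sigma>_def by (simp add: linV_diff[OF le] linV_sc[OF le])
  qed
  have \<epsilon>\<sigma>: "\<epsilon> (\<sigma> x) = x" for x
  proof -
    have "h (vx x) \<in> vecs n1" using hI unfolding vecs_vsupp by blast
    then show ?thesis unfolding \<sigma>_def e_def using vx by (simp add: \<epsilon>_diff \<epsilon>D)
  qed
  define s where "s x y = (\<Sum>k\<in>{k \<in> {..<n0}. g k = y}. \<sigma> x k)" for x y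
  have s1: "\<forall>x y. s (x + y) = (\<lambda>z. s x z + s y z)"
    unfolding s_def \<sigma>_add by (simp add: sum.distrib)
  have s2: "\<forall>a x. s (smul a x) = (\<lambda>y. a * s x y)"
    unfolding s_def \<sigma>_sc by (simp add: sum_distrib_left)
  have supp: "{y. s x y \<noteq> 0} \<subseteq> g ` {..<n0}" for x
  proof
    fix y assume y: "y \<in> {y. s x y \<noteq> 0}"
    have "{k \<in> {..<n0}. g k = y} \<noteq> {}"
    proof
      assume "{k \<in> {..<n0}. g k = y} = {}"
      then have "s x y = 0" unfolding s_def by (simp only: sum.empty)
      then show False using y by simp
    qed
    then show "y \<in> g ` {..<n0}" by blast
  qed
  have s3: "\<forall>x. finite {y. s x y \<noteq> 0}" using supp finite_subset by blast
  have s4: "(\<Sum>y\<in>{y. s x y \<noteq> 0}. smul (s x y) y) = x" for x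
  proof -
    have "(\<Sum>y\<in>{y. s x y \<noteq> 0}. smul (s x y) y) = (\<Sum>y\<in>g ` {..<n0}. smul (s x y) y)"
      by (rule sum.mono_neutral_left) (use supp in auto)
    also have "\<dots> = (\<Sum>y\<in>g ` {..<n0}. \<Sum>k\<in>{k \<in> {..<n0}. g k = y}. smul (\<sigma> x k) (g k))"
      unfolding s_def M.scale_sum_left by (rule sum.cong) auto
    also have "\<dots> = (\<Sum>k<n0. smul (\<sigma> x k) (g k))"
      by (rule sum.group) auto
    also have "\<dots> = x" using \<epsilon>\<sigma> unfolding \<epsilon>_def by simp
    finally show ?thesis .
  qed
  show ?thesis unfolding projective_module_def using s1 s2 s3 s4 by blast
qed

lemma frob_sum:
  fixes g :: "'b \<Rightarrow> 'a::comm_ring_1"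
  assumes "prime p" "CHAR('a) = p"
  shows "(sum g A) ^ (p ^ r) = (\<Sum>i\<in>A. g i ^ (p ^ r))"
  by (rule freshmans_dream_sum') (use assms in simp_all)

lemma frob_star:
  fixes m :: "'a::comm_ring_1 set" and d :: "nat \<Rightarrow> nat \<Rightarrow> nat \<Rightarrow> 'a"
  assumes p: "prime p" and ch: "CHAR('a) = p" and L: "local_ring_max m"
    and x: "\<forall>a\<in>m. a * x = 0" "x \<notin> ideal_pow m c" and cq: "c \<le> p ^ r"
    and Hj: "\<forall>v\<in>vecs n1. mat_app n0 n1 (frob_mat p r Dj) v = (\<lambda>_. 0) \<longrightarrow>
        (\<exists>w\<in>vecs n2. mat_app n1 n2 (frob_mat p r Dj1) w = v)"
  shows "\<forall>v\<in>vsupp {..<n1}. \<forall>\<mu>. linF \<mu> \<and> (\<forall>k. mat_app n0 n1 Dj v k \<in> m)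
      \<and> (\<forall>l\<in>{..<n2}. \<mu> (mat_app n1 n2 Dj1 (ev l)) \<in> m) \<longrightarrow> \<mu> v \<in> m"
proof (intro ballI allI impI)
  fix v :: "nat \<Rightarrow> 'a" and \<mu> :: "(nat \<Rightarrow> 'a) \<Rightarrow> 'a"
  assume v: "v \<in> vsupp {..<n1}"
    and H: "linF \<mu> \<and> (\<forall>k. mat_app n0 n1 Dj v k \<in> m) \<and> (\<forall>l\<in>{..<n2}. \<mu> (mat_app n1 n2 Dj1 (ev l)) \<in> m)"
  have lmu: "linF \<mu>" using H by blast
  show "\<mu> v \<in> m"
  proof (rule ccontr)
    assume nm: "\<mu> v \<notin> m"
    define q where "q = p ^ r"
    have q0: "q > 0" unfolding q_def using prime_gt_0_nat[OF p] by simp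
    have idm: "ideal m" using L by (rule local_ideal)
    have powm: "a ^ q \<in> m" if "a \<in> m" for a
    proof -
      have "a ^ q = a * a ^ (q - 1)" using q0 by (simp flip: power_Suc)
      then show ?thesis using that ideal_multR[OF idm] by metis
    qed
    have fs: "(sum g A) ^ q = (\<Sum>i\<in>A. g i ^ q)" for g :: "nat \<Rightarrow> 'a" and A
      unfolding q_def by (rule frob_sum[OF p ch])
    define V where "V i = x * v i ^ q" for i
    have Vs: "V \<in> vecs n1"
      unfolding vecs_def V_def using vsuppD[OF v] q0 by (auto simp: power_0_left)
    have "mat_app n0 n1 (frob_mat p r Dj) V = (\<lambda>_. 0)"
    proof
      fix i
      show "mat_app n0 n1 (frob_mat p r Dj) V i = 0"
      proof (cases "i < n0")
        case True
        have "(\<Sum>k<n1. frob_mat p r Dj i k * V k) = x * (\<Sum>k<n1. Dj i k * v k) ^ q"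
          unfolding fs frob_mat_def V_def q_def[symmetric] sum_distrib_left
          by (rule sum.cong) (simp_all add: power_mult_distrib ac_simps)
        also have "(\<Sum>k<n1. Dj i k * v k) = mat_app n0 n1 Dj v i"
          unfolding mat_app_def using True by simp
        also have "x * mat_app n0 n1 Dj v i ^ q = 0"
        proof -
          have "mat_app n0 n1 Dj v i ^ q \<in> m" using H powm by blast
          then have "mat_app n0 n1 Dj v i ^ q * x = 0" using x(1) by blast
          then show ?thesis by (simp add: mult.commute)
        qed
        finally show ?thesis unfolding mat_app_def using True by simp
      qed (simp add: mat_app_def)
    qed
    then obtain W where W: "W \<in> vecs n2" "mat_app n1 n2 (frob_mat p r Dj1) W = V"
      using Hj Vs by blast
    define cf where "cf i = \<mu> (ev i)" for i
    have muv: "\<mu> v = (\<Sum>i<n1. cf i * v i)" unfolding cf_def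
      by (rule linF_expand[OF _ lmu v]) simp
    have mul: "\<mu> (mat_app n1 n2 Dj1 (ev l)) = (\<Sum>i<n1. cf i * Dj1 i l)" if "l < n2" for l
    proof -
      have "\<mu> (mat_app n1 n2 Dj1 (ev l)) = (\<Sum>i<n1. cf i * mat_app n1 n2 Dj1 (ev l) i)"
        unfolding cf_def by (rule linF_expand[OF _ lmu mat_vsupp]) simp
      also have "\<dots> = (\<Sum>i<n1. cf i * Dj1 i l)"
        by (rule sum.cong) (simp_all add: mat_app_ev[OF that])
      finally show ?thesis .
    qed
    have S1: "(\<Sum>i<n1. cf i ^ q * V i) = x * (\<mu> v) ^ q"
      unfolding muv fs V_def sum_distrib_left
      by (rule sum.cong) (simp_all add: power_mult_distrib ac_simps)
    have "(\<Sum>i<n1. cf i ^ q * V i) = (\<Sum>i<n1. cf i ^ q * (\<Sum>l<n2. Dj1 i l ^ q * W l))"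
    proof (rule sum.cong)
      fix i assume "i \<in> {..<n1}"
      then have "V i = mat_app n1 n2 (frob_mat p r Dj1) W i" using W(2) by simp
      also have "\<dots> = (\<Sum>l<n2. Dj1 i l ^ q * W l)"
        using \<open>i \<in> {..<n1}\<close> unfolding mat_app_def frob_mat_def q_def by simp
      finally show "cf i ^ q * V i = cf i ^ q * (\<Sum>l<n2. Dj1 i l ^ q * W l)" by simp
    qed simp
    also have "\<dots> = (\<Sum>l<n2. W l * (\<Sum>i<n1. cf i * Dj1 i l) ^ q)"
      unfolding fs sum_distrib_left
      by (subst sum.swap) (rule sum.cong, simp, rule sum.cong, simp_all add: power_mult_distrib ac_simps)
    also have "\<dots> \<in> ideal_pow m q"
    proof (rule ideal_sum[OF ideal_pow_ideal])
      fix l assume l: "l \<in> {..<n2}"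
      then have "(\<Sum>i<n1. cf i * Dj1 i l) \<in> m" using H mul by auto
      then have "(\<Sum>i<n1. cf i * Dj1 i l) ^ q \<in> ideal_pow m q" by (rule pow_in_ideal_pow)
      then show "W l * (\<Sum>i<n1. cf i * Dj1 i l) ^ q \<in> ideal_pow m q"
        by (rule ideal_multL[OF ideal_pow_ideal])
    qed
    finally have xin: "x * (\<mu> v) ^ q \<in> ideal_pow m q" unfolding S1 .
    obtain u where u: "u * \<mu> v = 1" using local_unit[OF L nm] by blast
    have "u ^ q * (x * (\<mu> v) ^ q) = x * (u * \<mu> v) ^ q" by (simp add: power_mult_distrib ac_simps)
    also have "\<dots> = x" using u by simp
    finally have "x \<in> ideal_pow m q" using xin ideal_multL[OF ideal_pow_ideal] by metis
    then have "x \<in> ideal_pow m c" using ideal_pow_antimono[OF cq] unfolding q_def by blast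
    then show False using x(2) by blast
  qed
qed

lemma zero_fun_eq: "(\<lambda>_. 0) = (0 :: nat \<Rightarrow> 'a::zero)" by (simp add: fun_eq_iff)

lemma part2:
  fixes m :: "'a::comm_ring_1 set" and smul :: "'a \<Rightarrow> 'm::ab_group_add \<Rightarrow> 'm"
  assumes N: "noetherian_ring TYPE('a)" and L: "local_ring_max m"
    and p: "prime p" and ch: "CHAR('a) = p" and D: "depth_zero m"
    and fg: "fin_gen_module smul" and j1: "j \<ge> 1"
    and r: "real r > log (real p) (real (cR m))"
    and tor: "tor_frob_zero smul p r j"
  shows "projective_module smul"
proof -
  obtain rk d g where fr: "free_resolution smul rk d g" and
    Hj: "\<forall>v\<in>vecs (rk j). mat_app (rk (j - 1)) (rk j) (frob_mat p r (d j)) v = (\<lambda>_. 0) \<longrightarrow>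
        (\<exists>w\<in>vecs (rk (j + 1)). mat_app (rk j) (rk (j + 1)) (frob_mat p r (d (j + 1))) w = v)"
    using tor unfolding tor_frob_zero_def by blast
  note fr1 = fr[unfolded free_resolution_def, THEN conjunct1]
  note fr2 = fr[unfolded free_resolution_def, THEN conjunct2, THEN conjunct1]
  note fr3 = fr[unfolded free_resolution_def, THEN conjunct2, THEN conjunct2]
  obtain x where cpos: "cR m > 0" and x: "\<forall>a\<in>m. a * x = 0" "x \<notin> ideal_pow m (cR m)"
    using cR_props[OF N L D] by blast
  have cq: "cR m \<le> p ^ r" using cR_less[OF p cpos r] by simp
  have idm: "ideal m" using L by (rule local_ideal)
  have one: "1 \<notin> m" using L by (rule local_one)
  have unit: "\<And>a. a \<notin> m \<Longrightarrow> \<exists>u. u * a = 1" using local_unit[OF L] by blast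
  have x0: "x \<noteq> 0" using x(2) ideal_0[OF ideal_pow_ideal] by blast
  define Dm where "Dm i = mat_app (rk (i - 1)) (rk i) (d i)" for i
  have Dsuc: "Dm (i + 1) = mat_app (rk i) (rk (i + 1)) (d (i + 1))" for i by (simp add: Dm_def)
  have lDm: "linV (Dm i)" for i unfolding Dm_def by (rule linV_mat)
  have Dvs: "Dm i v \<in> vsupp {..<rk (i - 1)}" for i v unfolding Dm_def by (rule mat_vsupp)
  have exact: "\<forall>v\<in>vsupp {..<rk i}. Dm i v = 0 \<longleftrightarrow> (\<exists>w\<in>vsupp {..<rk (i + 1)}. Dm (i + 1) w = v)"
    if "i \<ge> 1" for i
    using fr3 that unfolding Dsuc unfolding Dm_def vecs_vsupp zero_fun_eq by blast
  have cplx: "\<forall>w\<in>vsupp {..<rk (i + 1)}. Dm i (Dm (i + 1) w) = 0" if "i \<ge> 1" for i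
  proof
    fix w :: "nat \<Rightarrow> 'a" assume w: "w \<in> vsupp {..<rk (i + 1)}"
    have "Dm (i + 1) w \<in> vsupp {..<rk i}" using Dvs[of "i + 1" w] by simp
    then show "Dm i (Dm (i + 1) w) = 0" using exact[OF that] w by blast
  qed
  define R where "R i \<longleftrightarrow> (\<exists>h. linV h \<and> (\<forall>y. h y \<in> vsupp {..<rk i}) \<and>
      (\<forall>v\<in>vsupp {..<rk i}. Dm i (h (Dm i v)) = Dm i v))" for i
  have Rj: "R j"
  proof -
    have star: "\<forall>v\<in>vsupp {..<rk j}. \<forall>\<mu>. linF \<mu> \<and> (\<forall>k. mat_app (rk (j - 1)) (rk j) (d j) v k \<in> m)
      \<and> (\<forall>l\<in>{..<rk (j + 1)}. \<mu> (mat_app (rk j) (rk (j + 1)) (d (j + 1)) (ev l)) \<in> m) \<longrightarrow> \<mu> v \<in> m"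
      by (rule frob_star[OF p ch L x cq Hj])
    have AI: "\<forall>w\<in>vsupp {..<rk (j + 1)}. Dm (j + 1) w \<in> vsupp {..<rk j}"
      using Dvs[of "j + 1"] by simp
    show ?thesis unfolding R_def
      by (rule reg_lemma[OF idm one unit _ lDm lDm AI cplx[OF j1]])
        (use star in \<open>simp_all add: Dm_def\<close>)
  qed
  have "\<forall>t. t < j \<longrightarrow> R (j - t)"
  proof
    fix t show "t < j \<longrightarrow> R (j - t)"
    proof (induction t)
      case 0 then show ?case using Rj by simp
    next
      case (Suc t)
      show ?case
      proof
        assume St: "Suc t < j"
        define i where "i = j - Suc t"
        have i1: "i \<ge> 1" and ii: "i + 1 = j - t" unfolding i_def using St by auto
        have "R (i + 1)" using Suc St ii by simp
        then obtain h where h: "linV h" "\<forall>y. h y \<in> vsupp {..<rk (i + 1)}"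
          "\<forall>v\<in>vsupp {..<rk (i + 1)}. Dm (i + 1) (h (Dm (i + 1) v)) = Dm (i + 1) v"
          unfolding R_def by blast
        have d'I: "\<forall>w\<in>vsupp {..<rk (i + 1)}. Dm (i + 1) w \<in> vsupp {..<rk i}"
          using Dvs[of "i + 1"] by simp
        have ex: "\<forall>v\<in>vsupp {..<rk i}. Dm i v = 0 \<longrightarrow> (\<exists>w\<in>vsupp {..<rk (i + 1)}. Dm (i + 1) w = v)"
          using exact[OF i1] by blast
        have "R i" unfolding R_def
          by (rule dstep[OF unit x0 x(1) _ lDm lDm d'I h ex cplx[OF i1]]) simp_all
        then show "R (j - Suc t)" unfolding i_def .
      qed
    qed
  qed
  then have "R 1" using j1 by (metis diff_diff_cancel diff_less less_one not_le zero_less_iff_neq_zero le_numeral_extra(2))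
  then obtain h where h: "linV h" "\<forall>y. h y \<in> vsupp {..<rk 1}"
      "\<forall>v\<in>vsupp {..<rk 1}. Dm 1 (h (Dm 1 v)) = Dm 1 v"
    unfolding R_def by blast
  have md: "module smul" using fg unfolding fin_gen_module_def by blast
  show ?thesis
    by (rule proj_lemma[OF md fr1 fr2 h(1) h(2)]) (use h(3) in \<open>simp add: Dm_def\<close>)
qed

theorem proposition1p3:
  fixes m :: "'a::comm_ring_1 set" and p :: nat
  assumes "noetherian_ring TYPE('a)"
    and "local_ring_max m"
    and "prime p" and "CHAR('a) = p"
    and "depth_zero m"
  shows "(\<forall>(rk :: int \<Rightarrow> nat) (d :: int \<Rightarrow> nat \<Rightarrow> nat \<Rightarrow> 'a) (r :: nat) (j :: int).
            free_complex rk d \<and> minimal_complex m rk d \<and> real r > log (real p) (real (cR m)) \<longrightarrow>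
            (frob_homology_zero p r rk d j \<longleftrightarrow> rk j = 0))
       \<and> (\<forall>(smul :: 'a \<Rightarrow> 'm::ab_group_add \<Rightarrow> 'm) (r :: nat) (j :: nat).
            fin_gen_module smul \<and> j \<ge> 1 \<and> real r > log (real p) (real (cR m)) \<and>
            tor_frob_zero smul p r j \<longrightarrow> projective_module smul)"
  using part1[OF assms(1,2,3,5)] part2[OF assms(1,2,3,4,5)] by blast

end
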